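(* Let $H\in(1/2,1)$, $c\in(0,2^{2H-2})$, $\lambda\in(0,c)$ and $n\in\mathbb{N}$. Then there exists a (unique in law) random vector $(X^{(n)}_1,\dots,X^{(n)}_n)\in\{0,1\}^n$ such that for all disjoint $A,B\subseteq\{1,\dots,n\}$, \[ P\Big(\bigcap_{i\in A}\{X^{(n)}_i=1\}\cap\bigcap_{i\in B}\{X^{(n)}_i=0\}\Big)=p_n\,c^{|A|-1}D^\circ_H(A,B) \] (a generalized Bernoulli process II, GBP-II). This process is stationary (for any $I\subseteq\{1,\dots,n\}$ and $m$ with $I+m\subseteq\{1,\dots,n\}$, $(X^{(n)}_{i+m})_{i\in I}$ has the same law as $(X^{(n)}_i)_{i\in I}$), $P(X^{(n)}_i=1)=p_n$, $P(X^{(n)}_i=0)=1-p_n$, and for $i\neq j$ in $\{1,\dots,n\}$, \[ \mathrm{Cov}(X^{(n)}_i,X^{(n)}_j)=p_n c|i-j|^{2H-2}-p_n^2 . \] For fixed $i\neq j$ in $\mathbb{N}$, $\lim_{n\to\infty}\mathrm{Corr}(X^{(n)}_i,X^{(n)}_j)=c|i-j|^{2H-2}$. Moreover, with $B^\circ_n=\sum_{i=1}^n X^{(n)}_i$, we have $E(B^\circ_n)=\lambda n^{2H-1}$ and, as $n\to\infty$, \[ E\big((B^\circ_n)^2\big)\sim \frac{\lambda c}{(2H-1)H}\,n^{4H-2},\qquad \mathrm{Var}(B^\circ_n)\sim n^{4H-2}\Big(\frac{\lambda c}{(2H-1)H}-\lambda^2\Big). \]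
   Context: For $n\in\mathbb{N}$ put $p_n=\lambda n^{2H-2}$. For a finite set $A=\{i_0<i_1<\dots<i_k\}\subset\mathbb{N}\cup\{0\}$ define $L^\circ_H(A)=\prod_{j=1}^{k}|i_j-i_{j-1}|^{2H-2}$; if $|A|=1$ set $L^\circ_H(A)=1$, and set $L^\circ_H(\emptyset)=c/p_n$. For disjoint finite sets $A,B\subset\mathbb{N}\cup\{0\}$ define $D^\circ_H(A,B)=\sum_{B'\subseteq B}(-1)^{|B'|}c^{|B'|}L^\circ_H(A\cup B')$ (in particular $D^\circ_H(A,\emptyset)=L^\circ_H(A)$). Notation $a_n\sim b_n$ means $a_n/b_n\to1$. *)

theory Defs
  imports "HOL-Probability.Probability" "HOL-Library.Landau_Symbols"
begin

definition pn :: "real \<Rightarrow> real \<Rightarrow> nat \<Rightarrow> real" where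
  "pn H lam n = lam * real n powr (2*H - 2)"

definition Lcirc :: "real \<Rightarrow> real \<Rightarrow> real \<Rightarrow> nat \<Rightarrow> nat set \<Rightarrow> real" where
  "Lcirc H c lam n A =
     (if A = {} then c / pn H lam n
      else (let xs = sorted_list_of_set A in
            \<Prod>j<length xs - 1. real (xs ! (Suc j) - xs ! j) powr (2*H - 2)))"

definition Dcirc :: "real \<Rightarrow> real \<Rightarrow> real \<Rightarrow> nat \<Rightarrow> nat set \<Rightarrow> nat set \<Rightarrow> real" where
  "Dcirc H c lam n A B =
     (\<Sum>B'\<in>Pow B. (-1) ^ card B' * c ^ card B' * Lcirc H c lam n (A \<union> B'))"

text \<open>A random vector (X_1,...,X_n) in {0,1}^n is represented by its law: a pmf on
  subsets S of {1..n}, where S = {i. X_i = 1}.\<close>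
definition GBP2 :: "real \<Rightarrow> real \<Rightarrow> real \<Rightarrow> nat \<Rightarrow> nat set pmf \<Rightarrow> bool" where
  "GBP2 H c lam n P \<longleftrightarrow>
     set_pmf P \<subseteq> Pow {1..n} \<and>
     (\<forall>A B. A \<subseteq> {1..n} \<longrightarrow> B \<subseteq> {1..n} \<longrightarrow> A \<inter> B = {} \<longrightarrow>
        measure_pmf.prob P {S. A \<subseteq> S \<and> B \<inter> S = {}}
          = pn H lam n * c powi (int (card A) - 1) * Dcirc H c lam n A B)"

definition Xc :: "nat \<Rightarrow> nat set \<Rightarrow> real" where
  "Xc i S = (if i \<in> S then 1 else 0)"

definition cov_pmf :: "'a pmf \<Rightarrow> ('a \<Rightarrow> real) \<Rightarrow> ('a \<Rightarrow> real) \<Rightarrow> real" where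
  "cov_pmf P X Y = measure_pmf.expectation P (\<lambda>s. (X s - measure_pmf.expectation P X) *
                                               (Y s - measure_pmf.expectation P Y))"

definition corr_pmf :: "'a pmf \<Rightarrow> ('a \<Rightarrow> real) \<Rightarrow> ('a \<Rightarrow> real) \<Rightarrow> real" where
  "corr_pmf P X Y = cov_pmf P X Y / sqrt (measure_pmf.variance P X * measure_pmf.variance P Y)"

end

theory Submission
  imports Defs
begin

lemma sum_Pow_insert:
  assumes "finite F" "x \<notin> F"
  shows "(\<Sum>T\<in>Pow (insert x F). h T) = (\<Sum>T\<in>Pow F. h T) + (\<Sum>T\<in>Pow F. h (insert x T))"
proof -
  have "(\<Sum>T\<in>Pow (insert x F). h T) = (\<Sum>T\<in>Pow F. h T) + (\<Sum>T\<in>insert x ` Pow F. h T)"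
    unfolding Pow_insert using assms by (intro sum.union_disjoint) auto
  also have "(\<Sum>T\<in>insert x ` Pow F. h T) = (\<Sum>T\<in>Pow F. h (insert x T))"
    using assms by (subst sum.reindex) (auto intro!: inj_onI)
  finally show ?thesis .
qed

definition Rr :: "(nat set \<Rightarrow> real) \<Rightarrow> nat set \<Rightarrow> nat set \<Rightarrow> real" where
  "Rr F A B = (\<Sum>B'\<in>Pow B. (-1) ^ card B' * F (A \<union> B'))"

lemma Rr_insert:
  assumes "finite B" "x \<notin> B" "x \<notin> A"
  shows "Rr F A (insert x B) = Rr F A B - Rr F (insert x A) B"
proof -
  have "Rr F A (insert x B) = Rr F A B + (\<Sum>B'\<in>Pow B. (-1) ^ card (insert x B') * F (A \<union> insert x B'))"
    unfolding Rr_def using assms by (subst sum_Pow_insert) auto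
  also have "(\<Sum>B'\<in>Pow B. (-1) ^ card (insert x B') * F (A \<union> insert x B')) = - Rr F (insert x A) B"
    unfolding Rr_def sum_negf[symmetric]
  proof (intro sum.cong refl)
    fix B' assume "B' \<in> Pow B"
    then have "finite B'" "x \<notin> B'" using assms finite_subset by auto
    then show "(-1) ^ card (insert x B') * F (A \<union> insert x B') = - ((-1) ^ card B' * F (insert x A \<union> B'))"
      by simp
  qed
  finally show ?thesis by simp
qed

lemma moebius:
  assumes "finite N"
  shows "\<And>A B. A \<subseteq> N \<Longrightarrow> B \<subseteq> N \<Longrightarrow> A \<inter> B = {} \<Longrightarrow> card (N - A - B) = k \<Longrightarrow>
    (\<Sum>S\<in>{S. S \<subseteq> N \<and> A \<subseteq> S \<and> B \<inter> S = {}}. Rr F S (N - S)) = Rr F A B"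
proof (induction k)
  case 0
  then have "N - A - B = {}" using assms by auto
  then have "{S. S \<subseteq> N \<and> A \<subseteq> S \<and> B \<inter> S = {}} = {A}" using 0 by auto
  moreover have "N - A = B" using 0 \<open>N - A - B = {}\<close> by auto
  ultimately show ?case by simp
next
  case (Suc k)
  then obtain x where x: "x \<in> N - A - B"
    by (metis card.empty ex_in_conv nat.distinct(1))
  have e: "{S. S \<subseteq> N \<and> A \<subseteq> S \<and> B \<inter> S = {}} =
      {S. S \<subseteq> N \<and> insert x A \<subseteq> S \<and> B \<inter> S = {}} \<union> {S. S \<subseteq> N \<and> A \<subseteq> S \<and> insert x B \<inter> S = {}}"
    by auto
  have "N - insert x A - B = (N - A - B) - {x}" "N - A - insert x B = (N - A - B) - {x}" by auto
  then have c1: "card (N - insert x A - B) = k" and c2: "card (N - A - insert x B) = k"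
    using Suc.prems x assms by (simp_all add: card_Diff_singleton)
  have "(\<Sum>S\<in>{S. S \<subseteq> N \<and> A \<subseteq> S \<and> B \<inter> S = {}}. Rr F S (N - S)) =
      (\<Sum>S\<in>{S. S \<subseteq> N \<and> insert x A \<subseteq> S \<and> B \<inter> S = {}}. Rr F S (N - S)) +
      (\<Sum>S\<in>{S. S \<subseteq> N \<and> A \<subseteq> S \<and> insert x B \<inter> S = {}}. Rr F S (N - S))"
    unfolding e using assms by (intro sum.union_disjoint) auto
  also have "\<dots> = Rr F (insert x A) B + Rr F A (insert x B)"
    using Suc.IH[of "insert x A" B] Suc.IH[of A "insert x B"] Suc.prems x c1 c2 by auto
  also have "\<dots> = Rr F A B"
    using Rr_insert[of B x A F] x Suc.prems assms finite_subset[of B N] by auto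
  finally show ?case .
qed



fun gl :: "(nat \<Rightarrow> real) \<Rightarrow> nat list \<Rightarrow> real" where
  "gl h (x # y # zs) = h (y - x) * gl h (y # zs)"
| "gl h _ = 1"

lemma prod_gl: "(\<Prod>j<length xs - 1. h (xs ! Suc j - xs ! j)) = gl h xs"
proof (induction h xs rule: gl.induct)
  case (1 h x y zs)
  have "(\<Prod>j<length (x # y # zs) - 1. h ((x # y # zs) ! Suc j - (x # y # zs) ! j))
      = (\<Prod>j<Suc (length zs). h ((x # y # zs) ! Suc j - (x # y # zs) ! j))" by simp
  also have "\<dots> = h (y - x) * (\<Prod>j<length zs. h ((y # zs) ! Suc j - (y # zs) ! j))"
    by (subst prod.lessThan_Suc_shift) simp
  also have "\<dots> = h (y - x) * gl h (y # zs)" using 1 by simp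
  finally show ?case by simp
qed auto

lemma gl_append: "xs \<noteq> [] \<Longrightarrow> gl h (xs @ [t]) = gl h xs * h (t - last xs)"
  by (induction h xs rule: gl.induct) auto

lemma gl_map: "(\<forall>x\<in>set xs. \<forall>y\<in>set xs. x < y \<longrightarrow> s y - s x = y - x) \<Longrightarrow> sorted_wrt (<) xs \<Longrightarrow>
   gl h (map s xs) = gl h xs"
  by (induction h xs rule: gl.induct) auto

lemma gl_scale: "sorted_wrt (<) xs \<Longrightarrow> (\<forall>d>0. g d = c * h d) \<Longrightarrow>
   c ^ (length xs - 1) * gl h xs = gl g xs"
proof (induction h xs rule: gl.induct)
  case (1 h x y zs)
  then have "c ^ (length (y # zs) - 1) * gl h (y # zs) = gl g (y # zs)" by simp
  moreover have "g (y - x) = c * h (y - x)" using 1 by simp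
  ultimately show ?case by (simp add: algebra_simps)
qed auto

lemma sorted_list_insert_max:
  assumes "finite U" "\<forall>x\<in>U. x < t"
  shows "sorted_list_of_set (insert t U) = sorted_list_of_set U @ [(t::nat)]"
proof -
  have "t \<notin> U" using assms by auto
  have "sorted_wrt (<) (sorted_list_of_set U @ [t]) \<and> set (sorted_list_of_set U @ [t]) = insert t U
        \<and> length (sorted_list_of_set U @ [t]) = card (insert t U)"
    using assms \<open>t \<notin> U\<close> by (auto simp: sorted_wrt_append)
  then show ?thesis using assms
    by (metis finite.insertI sorted_list_of_set_unique)
qed

lemma last_sorted_list: "finite U \<Longrightarrow> U \<noteq> {} \<Longrightarrow> last (sorted_list_of_set U) = Max (U::nat set)"
proof -
  assume U: "finite U" "U \<noteq> {}"
  let ?xs = "sorted_list_of_set U"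
  have ne: "?xs \<noteq> []" using U by simp
  have s: "sorted ?xs" by simp
  have "last ?xs \<in> U" using U ne last_in_set by (metis set_sorted_list_of_set)
  moreover have "\<forall>x\<in>U. x \<le> last ?xs"
  proof
    fix x assume "x \<in> U"
    then obtain i where i: "i < length ?xs" "?xs ! i = x" using U by (metis in_set_conv_nth set_sorted_list_of_set)
    have "?xs ! i \<le> ?xs ! (length ?xs - 1)" using s i by (intro sorted_nth_mono) auto
    then show "x \<le> last ?xs" using i ne by (simp add: last_conv_nth)
  qed
  ultimately show ?thesis using U by (intro Max_eqI[symmetric]) auto
qed

lemma sorted_list_map:
  assumes "finite U" "\<forall>x\<in>U. \<forall>y\<in>U. x < y \<longrightarrow> s x < (s y::nat)"
  shows "sorted_list_of_set (s ` U) = map s (sorted_list_of_set (U::nat set))"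
proof -
  let ?xs = "sorted_list_of_set U"
  have inj: "inj_on s U" using assms by (metis inj_onI linorder_neq_iff order_less_irrefl)
  have "sorted_wrt (<) (map s ?xs)"
    unfolding sorted_wrt_map using assms(2) sorted_wrt_mono_rel[of ?xs "(<)"]
    by (metis (no_types, lifting) assms(1) set_sorted_list_of_set sorted_list_of_set.strict_sorted_key_list_of_set sorted_wrt_mono_rel)
  moreover have "set (map s ?xs) = s ` U" using assms by simp
  moreover have "length (map s ?xs) = card (s ` U)" using assms inj by (simp add: card_image)
  ultimately show ?thesis using assms by (metis finite_imageI sorted_list_of_set_unique)
qed



lemma gl_append2: "xs \<noteq> [] \<Longrightarrow> gl h (xs @ ys) = gl h xs * gl h (last xs # ys)"
  by (induction h xs rule: gl.induct) auto

lemma sorted_list_Un: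
  assumes "finite U" "finite V" "\<forall>x\<in>U. \<forall>y\<in>V. x < y"
  shows "sorted_list_of_set (U \<union> V) = sorted_list_of_set U @ sorted_list_of_set (V::nat set)"
proof -
  have "sorted_wrt (<) (sorted_list_of_set U @ sorted_list_of_set V) \<and>
      set (sorted_list_of_set U @ sorted_list_of_set V) = U \<union> V \<and>
      length (sorted_list_of_set U @ sorted_list_of_set V) = card (U \<union> V)"
    using assms by (auto simp: sorted_wrt_append card_Un_disjoint disjoint_iff) (metis card_Un_disjoint disjoint_iff less_irrefl)
  then show ?thesis using assms by (metis finite_UnI sorted_list_of_set_unique)
qed

locale gbp =
  fixes H c lam :: real
  assumes H: "1/2 < H" "H < 1" and c: "0 < c" "c < 2 powr (2*H - 2)" and lam: "0 < lam" "lam < c"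
begin

definition aa :: "nat \<Rightarrow> real" where
  "aa d = (if d = 0 then 1 else c * real d powr (2*H - 2))"

definition gpr :: "nat set \<Rightarrow> real" where
  "gpr U = gl aa (sorted_list_of_set U)"

lemma c_lt1: "c < 1"
proof -
  have "2 powr (2*H - 2) < 2 powr 0" using H by (intro powr_less_mono) auto
  then show ?thesis using c by simp
qed

lemma aa_pos: "aa d > 0"
  using c by (simp add: aa_def)

lemma aa_antimono: "d \<le> d' \<Longrightarrow> aa d' \<le> aa d"
proof -
  assume "d \<le> d'"
  show ?thesis
  proof (cases "d = 0")
    case True
    show ?thesis
    proof (cases "d' = 0")
      case False
      have "real d' powr (2*H-2) \<le> 1" using False H by (smt (verit, ccfv_threshold) less_one of_nat_less_1_iff powr_le_cancel_iff powr_one_eq_one powr_zero_eq_one)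
      then have "c * real d' powr (2*H-2) \<le> c * 1" using c by (intro mult_left_mono) auto
      then show ?thesis using True False c_lt1 by (simp add: aa_def)
    qed (simp add: True)
  next
    case False
    then have "real d' powr (2*H-2) \<le> real d powr (2*H-2)"
      using \<open>d \<le> d'\<close> H by (intro powr_mono2') auto
    then show ?thesis using False \<open>d \<le> d'\<close> c by (auto simp: aa_def)
  qed
qed

lemma ratio_mono:
  assumes "m \<le> m'"
  shows "aa (Suc m) * aa m' \<le> aa (Suc m') * aa m"
proof (cases "m = 0")
  case True
  show ?thesis
  proof (cases "m' = 0")
    case True
    then show ?thesis using \<open>m = 0\<close> by simp
  next
    case False
    (* need c * aa m' <= aa (Suc m') *)
    have "(real m' / real (Suc m')) powr (2*H-2) \<le> (1/2) powr (2*H-2)"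
      using False H by (intro powr_mono2') (auto simp: field_simps)
    also have "(1/2::real) powr (2*H-2) = 1 / 2 powr (2*H-2)" by (simp add: powr_divide)
    finally have r: "(real m' / real (Suc m')) powr (2*H-2) \<le> 1 / 2 powr (2*H-2)" .
    have "c * (real m' powr (2*H-2)) = c * ((real m' / real (Suc m')) powr (2*H-2) * real (Suc m') powr (2*H-2))"
      by (simp add: powr_divide)
    also have "\<dots> \<le> c * (1 / 2 powr (2*H-2) * real (Suc m') powr (2*H-2))"
      using r c by (intro mult_left_mono mult_right_mono) auto
    also have "\<dots> = (c / 2 powr (2*H-2)) * real (Suc m') powr (2*H-2)" by simp
    also have "\<dots> \<le> 1 * real (Suc m') powr (2*H-2)"
      using c by (intro mult_right_mono) auto
    finally have "c * (real m' powr (2*H-2)) \<le> real (Suc m') powr (2*H-2)" by simp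
    then have "c * (c * real m' powr (2*H-2)) \<le> c * real (Suc m') powr (2*H-2)"
      using c by (intro mult_left_mono) auto
    then show ?thesis using True False by (simp add: aa_def)
  qed
next
  case False
  then have m': "m' \<noteq> 0" using assms by auto
  have "(real (Suc m) / real m) powr (2*H-2) \<le> (real (Suc m') / real m') powr (2*H-2)"
    using False m' assms H by (intro powr_mono2') (auto simp: field_simps)
  then have "real (Suc m) powr (2*H-2) * real m' powr (2*H-2) \<le> real (Suc m') powr (2*H-2) * real m powr (2*H-2)"
    using False m' by (simp add: powr_divide divide_simps)
  then have "c * c * (real (Suc m) powr (2*H-2) * real m' powr (2*H-2)) \<le> c * c * (real (Suc m') powr (2*H-2) * real m powr (2*H-2))"
    using c by (intro mult_left_mono) auto
  moreover have "aa (Suc m) * aa m' = c * c * (real (Suc m) powr (2*H-2) * real m' powr (2*H-2))"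
    using False m' by (simp add: aa_def)
  moreover have "aa (Suc m') * aa m = c * c * (real (Suc m') powr (2*H-2) * real m powr (2*H-2))"
    using False m' by (simp add: aa_def)
  ultimately show ?thesis by simp
qed

lemma gpr_single[simp]: "gpr {t} = 1"
  by (simp add: gpr_def)

lemma gpr_insert_max:
  assumes "finite U" "U \<noteq> {}" "\<forall>x\<in>U. x < t"
  shows "gpr (insert t U) = gpr U * aa (t - Max U)"
  unfolding gpr_def using assms by (subst sorted_list_insert_max) (auto simp: gl_append last_sorted_list)

lemma gpr_Un:
  assumes "finite U" "U \<noteq> {}" "finite V" "\<forall>x\<in>V. Max U < x"
  shows "gpr (U \<union> V) = gpr U * gpr (insert (Max U) V)"
proof -
  have "\<forall>x\<in>U. \<forall>y\<in>V. x < y" using assms by (meson Max_ge le_less_trans)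
  then have "sorted_list_of_set (U \<union> V) = sorted_list_of_set U @ sorted_list_of_set V"
    using assms by (simp add: sorted_list_Un)
  moreover have "sorted_list_of_set (insert (Max U) V) = Max U # sorted_list_of_set V"
    using sorted_list_Un[of "{Max U}" V] assms by simp
  ultimately show ?thesis using assms
    by (simp add: gpr_def gl_append2 last_sorted_list)
qed

lemma gpr_Lcirc:
  assumes "finite U" "U \<noteq> {}"
  shows "c ^ (card U - 1) * Lcirc H c lam n U = gpr U"
proof -
  let ?xs = "sorted_list_of_set U"
  have "Lcirc H c lam n U = gl (\<lambda>d. real d powr (2*H-2)) ?xs"
    using assms prod_gl[where xs="?xs"] by (simp add: Lcirc_def Let_def)
  moreover have "c ^ (length ?xs - 1) * gl (\<lambda>d. real d powr (2*H-2)) ?xs = gl aa ?xs"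
    by (rule gl_scale) (auto simp: aa_def)
  ultimately show ?thesis using assms by (simp add: gpr_def)
qed

end


context gbp begin

definition Ysum :: "nat set \<Rightarrow> nat \<Rightarrow> nat \<Rightarrow> nat \<Rightarrow> real" where
  "Ysum P lo e n = (\<Sum>T\<in>Pow {lo..<e}. (-1) ^ card T * gpr (P \<union> T \<union> {n}))"

lemma Ysum_step:
  assumes "finite P" "\<forall>x\<in>P. x < lo" "lo \<le> e" "e < n"
  shows "Ysum P lo (Suc e) n = Ysum P lo e n - Ysum P lo e e * aa (n - e)"
proof -
  have "{lo..<Suc e} = insert e {lo..<e}" using assms by auto
  then have "Ysum P lo (Suc e) n = Ysum P lo e n +
     (\<Sum>T\<in>Pow {lo..<e}. (-1) ^ card (insert e T) * gpr (P \<union> insert e T \<union> {n}))"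
    unfolding Ysum_def by (simp add: sum_Pow_insert)
  also have "(\<Sum>T\<in>Pow {lo..<e}. (-1) ^ card (insert e T) * gpr (P \<union> insert e T \<union> {n}))
      = - (Ysum P lo e e * aa (n - e))"
    unfolding Ysum_def sum_distrib_right sum_negf[symmetric]
  proof (intro sum.cong refl)
    fix T assume T: "T \<in> Pow {lo..<e}"
    then have fT: "finite T" "e \<notin> T" by (auto dest: finite_subset[of T "{lo..<e}"] simp del: Pow_iff)
    have e1: "P \<union> insert e T \<union> {n} = insert n (P \<union> T \<union> {e})" by auto
    have e2: "Max (P \<union> T \<union> {e}) = e"
      using assms T fT by (intro Max_eqI) auto
    have "gpr (P \<union> insert e T \<union> {n}) = gpr (P \<union> T \<union> {e}) * aa (n - e)"
    proof -
      have "gpr (insert n (P \<union> T \<union> {e})) = gpr (P \<union> T \<union> {e}) * aa (n - Max (P \<union> T \<union> {e}))"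
        by (rule gpr_insert_max) (use assms T fT in auto)
      then show ?thesis using e1 e2 by simp
    qed
    then show "(-1) ^ card (insert e T) * gpr (P \<union> insert e T \<union> {n}) =
      - ((-1) ^ card T * gpr (P \<union> T \<union> {e}) * aa (n - e))"
      using fT by simp
  qed
  finally show ?thesis by simp
qed

lemma Ysum_closed:
  assumes "finite P" "\<forall>x\<in>P. x < lo" "lo + k \<le> n"
  shows "Ysum P lo (lo + k) n = gpr (P \<union> {n}) - (\<Sum>j<k. Ysum P lo (lo+j) (lo+j) * aa (n - (lo+j)))"
  using assms(3)
proof (induction k)
  case 0
  then show ?case by (simp add: Ysum_def)
next
  case (Suc k)
  then have "Ysum P lo (Suc (lo + k)) n = Ysum P lo (lo + k) n - Ysum P lo (lo+k) (lo+k) * aa (n - (lo+k))"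
    using assms by (intro Ysum_step) auto
  then show ?case using Suc by simp
qed

definition gam :: "nat \<Rightarrow> nat \<Rightarrow> real" where
  "gam s hi = Ysum {s} (Suc s) hi hi"

lemma gam_rec:
  assumes "d \<ge> 1"
  shows "gam s (s + d) = aa d - (\<Sum>j<d-1. gam s (s+1+j) * aa (d-1-j))"
proof -
  have "gam s (s + d) = Ysum {s} (Suc s) (Suc s + (d - 1)) (s + d)"
    using assms by (simp add: gam_def)
  also have "\<dots> = gpr ({s} \<union> {s+d}) - (\<Sum>j<d-1. Ysum {s} (Suc s) (Suc s + j) (Suc s + j) * aa (s + d - (Suc s + j)))"
    using assms by (intro Ysum_closed) auto
  also have "gpr ({s} \<union> {s+d}) = aa d"
    using gpr_insert_max[of "{s}" "s+d"] assms by (simp add: insert_commute)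
  also have "(\<Sum>j<d-1. Ysum {s} (Suc s) (Suc s + j) (Suc s + j) * aa (s + d - (Suc s + j)))
      = (\<Sum>j<d-1. gam s (s+1+j) * aa (d-1-j))"
    by (intro sum.cong refl) (simp add: gam_def)
  finally show ?thesis .
qed

definition ff :: "nat \<Rightarrow> real" where "ff d = gam 0 d"

lemma gam_shift: "d \<ge> 1 \<Longrightarrow> gam s (s + d) = ff d"
proof (induction d rule: less_induct)
  case (less d)
  have sumeq: "(\<Sum>j<d-1. gam s (s+(1+j)) * aa (d-1-j)) = (\<Sum>j<d-1. gam 0 (0+(1+j)) * aa (d-1-j))"
  proof (intro sum.cong refl)
    fix j assume "j \<in> {..<d-1}"
    then have "1+j < d" "1+j \<ge> 1" by auto
    then show "gam s (s+(1+j)) * aa (d-1-j) = gam 0 (0+(1+j)) * aa (d-1-j)"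
      using less.IH[of "1+j"] by (simp add: ff_def)
  qed
  have "gam s (s + d) = aa d - (\<Sum>j<d-1. gam s (s+(1+j)) * aa (d-1-j))"
    using gam_rec[OF less.prems] by (simp add: add.assoc)
  also have "\<dots> = aa d - (\<Sum>j<d-1. gam 0 (0+(1+j)) * aa (d-1-j))" using sumeq by simp
  also have "\<dots> = gam 0 (0 + d)"
    using gam_rec[OF less.prems, of 0] by (simp add: add.assoc)
  finally show ?case by (simp add: ff_def)
qed

lemma ff_rec: "d \<ge> 1 \<Longrightarrow> ff d = aa d - (\<Sum>j<d-1. ff (j+1) * aa (d-1-j))"
  using gam_rec[of d 0] by (simp add: ff_def)

lemma ff_conv: "d \<ge> 1 \<Longrightarrow> (\<Sum>j<d. ff (j+1) * aa (d-1-j)) = aa d"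
proof -
  assume d: "d \<ge> 1"
  then obtain e where e: "d = Suc e" by (cases d) auto
  show ?thesis using ff_rec[OF d] by (simp add: e aa_def)
qed

lemma ff_nonneg: "d \<ge> 1 \<Longrightarrow> ff d \<ge> 0"
proof (induction d rule: less_induct)
  case (less d)
  show ?case
  proof (cases "d = 1")
    case True
    then show ?thesis using ff_rec[of 1] c by (simp add: aa_def)
  next
    case False
    then obtain n where n: "d = Suc n" "n \<ge> 1" using less.prems by (cases d) auto
    have IH: "\<And>j. j < n \<Longrightarrow> ff (j+1) \<ge> 0" using less n by auto
    have h: "ff (Suc n) = aa (Suc n) - (\<Sum>j<n. ff (j+1) * aa (n-j))"
      using ff_rec[of "Suc n"] by simp
    have "aa n * ff (Suc n) = aa n * aa (Suc n) - aa n * (\<Sum>j<n. ff (j+1) * aa (n-j))"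
      by (subst h) (simp add: right_diff_distrib)
    also have "aa n * aa (Suc n) = aa (Suc n) * (\<Sum>j<n. ff (j+1) * aa (n-1-j))"
      using ff_conv[OF n(2)] by simp
    finally have eq: "aa n * ff (Suc n) = (\<Sum>j<n. ff (j+1) * (aa (Suc n) * aa (n-1-j) - aa n * aa (n-j)))"
      by (simp add: sum_distrib_left sum_subtractf algebra_simps)
    have "(\<Sum>j<n. ff (j+1) * (aa (Suc n) * aa (n-1-j) - aa n * aa (n-j))) \<ge> 0"
    proof (intro sum_nonneg mult_nonneg_nonneg)
      fix j assume j: "j \<in> {..<n}"
      then show "ff (j+1) \<ge> 0" using IH by auto
      have "Suc (n-1-j) = n - j" using j by auto
      then show "aa (Suc n) * aa (n-1-j) - aa n * aa (n-j) \<ge> 0"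
        using ratio_mono[of "n-1-j" n] by (simp add: mult.commute)
    qed
    then have "aa n * ff (Suc n) \<ge> 0" using eq by simp
    then show ?thesis using aa_pos[of n] n by (simp add: zero_le_mult_iff)
  qed
qed

definition rho :: "nat \<Rightarrow> real" where "rho k = 1 - (\<Sum>j<k. ff (j+1))"

lemma rho_Suc: "rho (Suc k) = rho k - ff (Suc k)"
  by (simp add: rho_def)

lemma rho_nonneg: "rho k \<ge> 0"
proof (cases "k = 0")
  case True then show ?thesis by (simp add: rho_def)
next
  case False
  then have k: "k \<ge> 1" by auto
  have "(\<Sum>j<k. ff (j+1) * aa k) \<le> (\<Sum>j<k. ff (j+1) * aa (k-1-j))"
    using ff_nonneg by (intro sum_mono mult_left_mono aa_antimono) auto
  also have "\<dots> = aa k" using ff_conv[OF k] .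
  finally have "aa k * (\<Sum>j<k. ff (j+1)) \<le> aa k"
    by (simp add: sum_distrib_left mult.commute)
  then have "aa k * (1 - rho k) \<le> aa k * 1"
    by (simp add: rho_def)
  then show ?thesis using aa_pos[of k] by (simp add: mult_le_cancel_left_pos)
qed

definition Vs :: "nat \<Rightarrow> nat \<Rightarrow> real" where "Vs lo m = Ysum {} lo m m"

lemma Vs_rho: "Vs lo (lo + k) = rho k"
proof (induction k arbitrary: lo)
  case 0
  then show ?case by (simp add: Vs_def Ysum_def rho_def)
next
  case (Suc k)
  have e: "{lo..<lo + Suc k} = insert lo {Suc lo..<Suc lo + k}" by auto
  have "Vs lo (lo + Suc k) = Vs (Suc lo) (Suc lo + k) +
     (\<Sum>T\<in>Pow {Suc lo..<Suc lo + k}. (-1) ^ card (insert lo T) * gpr ({} \<union> insert lo T \<union> {lo + Suc k}))"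
    unfolding Vs_def Ysum_def e by (subst sum_Pow_insert) auto
  also have "(\<Sum>T\<in>Pow {Suc lo..<Suc lo + k}. (-1) ^ card (insert lo T) * gpr ({} \<union> insert lo T \<union> {lo + Suc k}))
     = - gam lo (lo + Suc k)"
    unfolding gam_def Ysum_def sum_negf[symmetric]
  proof (intro sum.cong)
    fix T assume "T \<in> Pow {Suc lo..<lo + Suc k}"
    then have "finite T" "lo \<notin> T" using finite_subset by auto
    then show "(-1) ^ card (insert lo T) * gpr ({} \<union> insert lo T \<union> {lo + Suc k}) =
        - ((-1) ^ card T * gpr ({lo} \<union> T \<union> {lo + Suc k}))" by simp
  qed auto
  also have "gam lo (lo + Suc k) = ff (Suc k)" by (rule gam_shift) auto
  finally show ?case using Suc.IH[of "Suc lo"] by (simp add: rho_Suc)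
qed

lemma rho_conv: "(\<Sum>j<Suc k. rho j * aa (k - j)) = 1"
proof -
  have "Vs 0 (0 + k) = gpr ({} \<union> {k}) - (\<Sum>j<k. Ysum {} 0 (0+j) (0+j) * aa (k - (0+j)))"
    unfolding Vs_def using Ysum_closed[of "{}" 0 k k] by simp
  then have "rho k = 1 - (\<Sum>j<k. rho j * aa (k - j))"
    using Vs_rho[of 0] by (simp add: Vs_def)
  then show ?thesis by (simp add: aa_def)
qed

lemma rho_sum_bound: "aa k * (\<Sum>j<Suc k. rho j) \<le> 1"
proof -
  have "aa k * (\<Sum>j<Suc k. rho j) = (\<Sum>j<Suc k. rho j * aa k)" by (simp only: sum_distrib_left mult.commute)
  also have "\<dots> \<le> (\<Sum>j<Suc k. rho j * aa (k - j))"
    using rho_nonneg by (intro sum_mono mult_left_mono aa_antimono) auto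
  finally show ?thesis using rho_conv by simp
qed

end


lemma sum_Pow_Un:
  assumes "finite F1" "finite F2" "F1 \<inter> F2 = {}"
  shows "(\<Sum>T\<in>Pow (F1 \<union> F2). h T) = (\<Sum>T1\<in>Pow F1. \<Sum>T2\<in>Pow F2. h (T1 \<union> T2))"
  using assms(2,3)
proof (induction F2 arbitrary: h rule: finite_induct)
  case empty
  then show ?case by simp
next
  case (insert x F)
  have xn: "x \<notin> F1 \<union> F" using insert by auto
  have "(\<Sum>T\<in>Pow (F1 \<union> insert x F). h T) = (\<Sum>T\<in>Pow (insert x (F1 \<union> F)). h T)" by simp
  also have "\<dots> = (\<Sum>T\<in>Pow (F1 \<union> F). h T) + (\<Sum>T\<in>Pow (F1 \<union> F). h (insert x T))"
    using xn insert assms by (intro sum_Pow_insert) auto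
  also have "\<dots> = (\<Sum>T1\<in>Pow F1. \<Sum>T2\<in>Pow F. h (T1 \<union> T2)) + (\<Sum>T1\<in>Pow F1. \<Sum>T2\<in>Pow F. h (insert x (T1 \<union> T2)))"
    using insert.IH[of h] insert.IH[of "\<lambda>T. h (insert x T)"] insert.prems by auto
  also have "\<dots> = (\<Sum>T1\<in>Pow F1. \<Sum>T2\<in>Pow (insert x F). h (T1 \<union> T2))"
    using insert by (simp add: sum_Pow_insert sum.distrib)
  finally show ?case .
qed

context gbp begin

definition W :: "nat \<Rightarrow> nat \<Rightarrow> nat set \<Rightarrow> real" where
  "W lo hi S = (\<Sum>T\<in>Pow ({lo..hi} - S). (-1) ^ card T * gpr (S \<union> T))"

lemma W_C2:
  assumes "S' \<noteq> {}" "S' \<subseteq> {lo..s}" "s = Max S'" "s < hi"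
  shows "W lo hi (insert hi S') = W lo s S' * ff (hi - s)"
proof -
  have fS: "finite S'" using assms finite_subset by blast
  have sS: "s \<in> S'" using assms fS by simp
  have e: "{lo..hi} - insert hi S' = ({lo..s} - S') \<union> {Suc s..<hi}" using assms by auto
  have "W lo hi (insert hi S') = (\<Sum>T1\<in>Pow ({lo..s} - S'). \<Sum>T2\<in>Pow {Suc s..<hi}.
      (-1) ^ card (T1 \<union> T2) * gpr (insert hi S' \<union> (T1 \<union> T2)))"
    unfolding W_def e by (intro sum_Pow_Un) auto
  also have "\<dots> = (\<Sum>T1\<in>Pow ({lo..s} - S'). \<Sum>T2\<in>Pow {Suc s..<hi}.
      ((-1) ^ card T1 * gpr (S' \<union> T1)) * ((-1) ^ card T2 * gpr ({s} \<union> T2 \<union> {hi})))"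
  proof (intro sum.cong refl)
    fix T1 T2 assume T1: "T1 \<in> Pow ({lo..s} - S')" and T2: "T2 \<in> Pow {Suc s..<hi}"
    have f1: "finite T1" using T1 by (meson PowD finite_Diff finite_atLeastAtMost finite_subset)
    have f2: "finite T2" using T2 by (meson PowD finite_atLeastLessThan finite_subset)
    have d: "T1 \<inter> T2 = {}"
    proof (rule ccontr)
      assume "T1 \<inter> T2 \<noteq> {}"
      then obtain x where "x \<in> T1" "x \<in> T2" by blast
      then show False using T1 T2 by (metis Diff_iff PowD atLeastAtMost_iff atLeastLessThan_iff not_less_eq_eq subsetD)
    qed
    have M: "Max (S' \<union> T1) = s" using T1 assms fS f1 sS by (intro Max_eqI) auto
    have "insert hi S' \<union> (T1 \<union> T2) = (S' \<union> T1) \<union> (T2 \<union> {hi})" by auto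
    moreover have "gpr ((S' \<union> T1) \<union> (T2 \<union> {hi})) = gpr (S' \<union> T1) * gpr (insert (Max (S' \<union> T1)) (T2 \<union> {hi}))"
    proof (rule gpr_Un)
      show "\<forall>x\<in>T2 \<union> {hi}. Max (S' \<union> T1) < x" unfolding M using T2 assms by auto
    qed (use fS f1 f2 sS in auto)
    moreover have "insert s (T2 \<union> {hi}) = {s} \<union> T2 \<union> {hi}" by auto
    ultimately show "(-1) ^ card (T1 \<union> T2) * gpr (insert hi S' \<union> (T1 \<union> T2)) =
      ((-1) ^ card T1 * gpr (S' \<union> T1)) * ((-1) ^ card T2 * gpr ({s} \<union> T2 \<union> {hi}))"
      using M f1 f2 d by (simp add: card_Un_disjoint power_add)
  qed
  also have "\<dots> = W lo s S' * gam s hi"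
    unfolding W_def gam_def Ysum_def by (simp add: sum_product)
  also have "gam s hi = ff (hi - s)" using gam_shift[of "hi - s" s] assms by simp
  finally show ?thesis .
qed

lemma W_R:
  assumes "S \<noteq> {}" "S \<subseteq> {lo..m}" "m = Max S"
  shows "W lo (m + k) S = W lo m S * rho k"
proof (induction k)
  case 0
  then show ?case by (simp add: rho_def)
next
  case (Suc k)
  have fS: "finite S" using assms finite_subset by blast
  have mS: "m \<in> S" using assms fS by simp
  have e: "{lo..m + Suc k} - S = insert (Suc (m + k)) ({lo..m+k} - S)" using assms by auto
  have "W lo (m + Suc k) S = W lo (m + k) S +
     (\<Sum>T\<in>Pow ({lo..m+k} - S). (-1) ^ card (insert (Suc (m + k)) T) * gpr (S \<union> insert (Suc (m + k)) T))"
    unfolding W_def e by (subst sum_Pow_insert) auto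
  also have "(\<Sum>T\<in>Pow ({lo..m+k} - S). (-1) ^ card (insert (Suc (m + k)) T) * gpr (S \<union> insert (Suc (m + k)) T))
      = - W lo (Suc (m+k)) (insert (Suc (m + k)) S)"
    unfolding W_def sum_negf[symmetric]
  proof (intro sum.cong)
    show "Pow ({lo..m + k} - S) = Pow ({lo..Suc (m + k)} - insert (Suc (m + k)) S)" by auto
  next
    fix T assume "T \<in> Pow ({lo..Suc (m + k)} - insert (Suc (m + k)) S)"
    then have "finite T" "Suc (m+k) \<notin> T" by (auto intro: finite_subset[of T "{lo..Suc (m+k)}"])
    then show "(-1) ^ card (insert (Suc (m + k)) T) * gpr (S \<union> insert (Suc (m + k)) T) =
      - ((-1) ^ card T * gpr (insert (Suc (m + k)) S \<union> T))" by simp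
  qed
  also have "W lo (Suc (m+k)) (insert (Suc (m + k)) S) = W lo m S * ff (Suc (m+k) - m)"
    using assms by (intro W_C2) auto
  finally show ?case using Suc by (simp add: rho_Suc algebra_simps)
qed

lemma W_nonneg_max:
  assumes "S \<noteq> {}" "S \<subseteq> {lo..m}" "m = Max S"
  shows "W lo m S \<ge> 0"
  using assms
proof (induction "card S" arbitrary: S m rule: less_induct)
  case less
  have fS: "finite S" using less finite_subset by blast
  have mS: "m \<in> S" using less fS by simp
  show ?case
  proof (cases "S = {m}")
    case True
    have lm: "lo \<le> m" using less mS by auto
    have "W lo m S = Vs lo m"
      unfolding W_def Vs_def Ysum_def True
      by (intro sum.cong) (auto simp: insert_commute)
    also have "\<dots> = rho (m - lo)" using Vs_rho[of lo "m - lo"] lm by simp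
    finally show ?thesis using rho_nonneg by simp
  next
    case False
    define S' where "S' = S - {m}"
    have ne: "S' \<noteq> {}" using False mS S'_def by auto
    have fS': "finite S'" using fS S'_def by auto
    define s where "s = Max S'"
    have sS: "s \<in> S'" using fS' ne s_def by simp
    have sm: "s < m" using sS S'_def less fS by (metis DiffD1 DiffD2 Max_ge fS insertI1 le_neq_implies_less singletonD)
    have Ssub: "S' \<subseteq> {lo..s}" using less S'_def s_def fS' by auto
    have "S = insert m S'" using S'_def mS by auto
    then have "W lo m S = W lo s S' * ff (m - s)" using ne Ssub s_def sm by (simp add: W_C2)
    moreover have "card S' < card S" using fS mS S'_def by (metis card_Diff1_less)
    moreover have "W lo s S' \<ge> 0"
      using less.hyps[of S' s] ne Ssub s_def calculation by simp
    moreover have "ff (m - s) \<ge> 0" using sm ff_nonneg by simp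
    ultimately show ?thesis by simp
  qed
qed

lemma W_nonneg:
  assumes "S \<noteq> {}" "S \<subseteq> {lo..hi}"
  shows "W lo hi S \<ge> 0"
proof -
  have fS: "finite S" using assms finite_subset by blast
  define m where "m = Max S"
  have mS: "m \<in> S" using fS assms m_def by simp
  then have mh: "m \<le> hi" using assms by auto
  have Sm: "S \<subseteq> {lo..m}" using assms fS m_def by auto
  have "W lo (m + (hi - m)) S = W lo m S * rho (hi - m)" using W_R assms Sm m_def by blast
  then have "W lo hi S = W lo m S * rho (hi - m)" using mh by simp
  then show ?thesis using W_nonneg_max[OF assms(1) Sm m_def] rho_nonneg by simp
qed

end


context gbp begin

lemma pn_pos: "n \<ge> 1 \<Longrightarrow> pn H lam n > 0"
  using lam by (simp add: pn_def)

lemma pn_le_aa: assumes "n \<ge> 1" shows "pn H lam n \<le> aa (n - 1)"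
proof (cases "n = 1")
  case True
  then show ?thesis using lam c_lt1 by (simp add: pn_def aa_def)
next
  case False
  then have n2: "n \<ge> 2" using assms by auto
  have "real n powr (2*H-2) \<le> real (n-1) powr (2*H-2)"
    using n2 H by (intro powr_mono2') auto
  then have "lam * real n powr (2*H-2) \<le> c * real (n-1) powr (2*H-2)"
    using lam by (intro mult_mono) auto
  then show ?thesis using n2 by (simp add: pn_def aa_def)
qed

definition Fv :: "nat \<Rightarrow> nat set \<Rightarrow> real" where
  "Fv n U = pn H lam n * c powi (int (card U) - 1) * Lcirc H c lam n U"

lemma Fv_empty: "n \<ge> 1 \<Longrightarrow> Fv n {} = 1"
proof -
  assume n: "n \<ge> 1"
  have "c powi (int (card ({}::nat set)) - 1) = inverse c" by (simp add: power_int_def)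
  then show ?thesis using pn_pos[OF n] c by (simp add: Fv_def Lcirc_def)
qed

lemma Fv_ne: assumes "finite U" "U \<noteq> {}" shows "Fv n U = pn H lam n * gpr U"
proof -
  have "card U \<ge> 1" using assms by (metis One_nat_def Suc_leI card_gt_0_iff)
  then have "int (card U) - 1 = int (card U - 1)" by simp
  then have "c powi (int (card U) - 1) = c ^ (card U - 1)" by (simp only: power_int_of_nat)
  then show ?thesis using gpr_Lcirc[OF assms, of n] by (simp add: Fv_def)
qed

lemma Dcirc_Rr:
  assumes "A \<inter> B = {}" "finite A" "finite B"
  shows "pn H lam n * c powi (int (card A) - 1) * Dcirc H c lam n A B = Rr (Fv n) A B"
  unfolding Dcirc_def Rr_def sum_distrib_left
proof (intro sum.cong refl)
  fix B' assume B': "B' \<in> Pow B"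
  then have fB': "finite B'" "A \<inter> B' = {}" using assms finite_subset[of B' B] by auto
  then have cd: "card (A \<union> B') = card A + card B'" using assms by (simp add: card_Un_disjoint)
  have "c powi (int (card A) - 1) * c ^ card B' = c powi (int (card A) - 1 + int (card B'))"
    using c by (simp add: power_int_add)
  also have "int (card A) - 1 + int (card B') = int (card (A \<union> B')) - 1" using cd by simp
  finally have "c powi (int (card A) - 1) * c ^ card B' = c powi (int (card (A \<union> B')) - 1)" .
  then show "pn H lam n * c powi (int (card A) - 1) * ((-1) ^ card B' * c ^ card B' * Lcirc H c lam n (A \<union> B'))
     = (-1) ^ card B' * Fv n (A \<union> B')"
  proof -
    have "pn H lam n * c powi (int (card A) - 1) * ((-1) ^ card B' * c ^ card B' * Lcirc H c lam n (A \<union> B'))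
      = (-1) ^ card B' * (pn H lam n * (c powi (int (card A) - 1) * c ^ card B') * Lcirc H c lam n (A \<union> B'))"
      by (simp only: mult_ac)
    then show ?thesis unfolding Fv_def using \<open>c powi (int (card A) - 1) * c ^ card B' = c powi (int (card (A \<union> B')) - 1)\<close>
      by simp
  qed
qed

definition wt :: "nat \<Rightarrow> nat set \<Rightarrow> real" where
  "wt n S = Rr (Fv n) S ({1..n} - S)"

lemma wt_ne: assumes "S \<noteq> {}" "S \<subseteq> {1..n}" shows "wt n S = pn H lam n * W 1 n S"
  unfolding wt_def Rr_def W_def sum_distrib_left
proof (intro sum.cong refl)
  fix T assume "T \<in> Pow ({1..n} - S)"
  then have "finite T" using finite_subset by (metis Diff_subset PowD finite_atLeastAtMost)
  moreover have "finite S" using assms finite_subset by blast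
  ultimately show "(-1) ^ card T * Fv n (S \<union> T) = pn H lam n * ((-1) ^ card T * gpr (S \<union> T))"
    using assms by (simp add: Fv_ne)
qed

lemma Esum: "n \<ge> 1 \<Longrightarrow> (\<Sum>T\<in>Pow {1..m}. (-1) ^ card T * Fv n T) = 1 - pn H lam n * (\<Sum>k<m. rho k)"
proof (induction m)
  case 0
  then show ?case by (simp add: Fv_empty)
next
  case (Suc m)
  have e: "{1..Suc m} = insert (Suc m) {1..m}" by auto
  have "(\<Sum>T\<in>Pow {1..Suc m}. (-1) ^ card T * Fv n T) = (\<Sum>T\<in>Pow {1..m}. (-1) ^ card T * Fv n T)
    + (\<Sum>T\<in>Pow {1..m}. (-1) ^ card (insert (Suc m) T) * Fv n (insert (Suc m) T))"
    unfolding e by (subst sum_Pow_insert) auto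
  also have "(\<Sum>T\<in>Pow {1..m}. (-1) ^ card (insert (Suc m) T) * Fv n (insert (Suc m) T))
    = - (pn H lam n * Vs 1 (Suc m))"
    unfolding Vs_def Ysum_def sum_distrib_left sum_negf[symmetric]
  proof (intro sum.cong)
    fix T assume "T \<in> Pow {1..<Suc m}"
    then have "finite T" "Suc m \<notin> T" by (meson PowD finite_atLeastLessThan finite_subset, auto)
    then show "(-1) ^ card (insert (Suc m) T) * Fv n (insert (Suc m) T) =
        - (pn H lam n * ((-1) ^ card T * gpr ({} \<union> T \<union> {Suc m})))"
      by (simp add: Fv_ne)
  qed auto
  also have "Vs 1 (Suc m) = rho m" using Vs_rho[of 1 m] by simp
  finally show ?case using Suc by (simp add: algebra_simps)
qed

lemma wt_empty: "n \<ge> 1 \<Longrightarrow> wt n {} = 1 - pn H lam n * (\<Sum>k<n. rho k)"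
  unfolding wt_def Rr_def using Esum[of n n] by simp

lemma wt_nonneg: assumes "n \<ge> 1" "S \<subseteq> {1..n}" shows "wt n S \<ge> 0"
proof (cases "S = {}")
  case True
  have "aa (n-1) * (\<Sum>j<Suc (n-1). rho j) \<le> 1" by (rule rho_sum_bound)
  then have "aa (n-1) * (\<Sum>j<n. rho j) \<le> 1" using assms by simp
  moreover have "pn H lam n * (\<Sum>j<n. rho j) \<le> aa (n-1) * (\<Sum>j<n. rho j)"
    using pn_le_aa[OF assms(1)] rho_nonneg by (intro mult_right_mono sum_nonneg) auto
  ultimately show ?thesis using True assms wt_empty by simp
next
  case False
  then show ?thesis using wt_ne[OF False assms(2)] W_nonneg[OF False assms(2)] pn_pos[OF assms(1)] by simp
qed

lemma wt_sum: "n \<ge> 1 \<Longrightarrow> A \<subseteq> {1..n} \<Longrightarrow> B \<subseteq> {1..n} \<Longrightarrow> A \<inter> B = {} \<Longrightarrow>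
  (\<Sum>S\<in>{S. S \<subseteq> {1..n} \<and> A \<subseteq> S \<and> B \<inter> S = {}}. wt n S) = Rr (Fv n) A B"
  unfolding wt_def by (rule moebius) auto

lemma prob_restrict:
  assumes "set_pmf p \<subseteq> Z"
  shows "measure_pmf.prob p X = measure_pmf.prob p (X \<inter> Z)"
proof -
  have "measure_pmf.prob p X = measure_pmf.prob p (X \<inter> set_pmf p)" by (simp add: measure_Int_set_pmf)
  also have "X \<inter> set_pmf p = (X \<inter> Z) \<inter> set_pmf p" using assms by auto
  also have "measure_pmf.prob p \<dots> = measure_pmf.prob p (X \<inter> Z)" by (simp add: measure_Int_set_pmf)
  finally show ?thesis .
qed

lemma GBP2_iff:
  assumes n: "n \<ge> 1" and sp: "set_pmf P \<subseteq> Pow {1..n}"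
  shows "GBP2 H c lam n P \<longleftrightarrow> (\<forall>A B. A \<subseteq> {1..n} \<longrightarrow> B \<subseteq> {1..n} \<longrightarrow> A \<inter> B = {} \<longrightarrow>
        measure_pmf.prob P {S. A \<subseteq> S \<and> B \<inter> S = {}} = Rr (Fv n) A B)"
proof -
  have key: "\<And>A B. A \<subseteq> {1..n} \<Longrightarrow> B \<subseteq> {1..n} \<Longrightarrow> A \<inter> B = {} \<Longrightarrow>
     pn H lam n * c powi (int (card A) - 1) * Dcirc H c lam n A B = Rr (Fv n) A B"
    by (rule Dcirc_Rr) (auto intro: finite_subset[OF _ finite_atLeastAtMost])
  show ?thesis unfolding GBP2_def using sp key by auto
qed

lemma exists_GBP2:
  assumes n: "n \<ge> 1"
  shows "\<exists>P. GBP2 H c lam n P"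
proof -
  define f where "f S = (if S \<subseteq> {1..n} then wt n S else 0)" for S
  have fnn: "\<And>S. 0 \<le> f S" using wt_nonneg n by (simp add: f_def)
  have sum1: "(\<Sum>S\<in>Pow {1..n}. f S) = 1"
  proof -
    have "(\<Sum>S\<in>Pow {1..n}. f S) = (\<Sum>S\<in>{S. S \<subseteq> {1..n} \<and> {} \<subseteq> S \<and> {} \<inter> S = {}}. wt n S)"
      by (intro sum.cong) (auto simp: f_def)
    also have "\<dots> = Rr (Fv n) {} {}" using wt_sum[of n "{}" "{}"] n by simp
    also have "\<dots> = 1" using n by (simp add: Rr_def Fv_empty)
    finally show ?thesis .
  qed
  have int1: "(\<integral>\<^sup>+x. ennreal (f x) \<partial>count_space UNIV) = 1"
  proof -
    have "(\<integral>\<^sup>+x. ennreal (f x) \<partial>count_space UNIV) = (\<Sum>S\<in>Pow {1..n}. ennreal (f S))"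
      by (intro nn_integral_count_space') (auto simp: f_def)
    also have "\<dots> = ennreal (\<Sum>S\<in>Pow {1..n}. f S)" using fnn by (simp add: sum_ennreal)
    finally show ?thesis using sum1 by simp
  qed
  define P where "P = embed_pmf f"
  have pmfP: "pmf P S = f S" for S unfolding P_def using fnn int1 by (simp add: pmf_embed_pmf)
  have sp: "set_pmf P \<subseteq> Pow {1..n}" using pmfP by (auto simp: set_pmf_eq f_def)
  have "GBP2 H c lam n P"
    unfolding GBP2_iff[OF n sp]
  proof (intro allI impI)
    fix A B assume AB: "A \<subseteq> {1..n}" "B \<subseteq> {1..n}" "A \<inter> B = {}"
    have "measure_pmf.prob P {S. A \<subseteq> S \<and> B \<inter> S = {}} = measure_pmf.prob P ({S. A \<subseteq> S \<and> B \<inter> S = {}} \<inter> Pow {1..n})"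
      using sp by (rule prob_restrict)
    also have "{S. A \<subseteq> S \<and> B \<inter> S = {}} \<inter> Pow {1..n} = {S. S \<subseteq> {1..n} \<and> A \<subseteq> S \<and> B \<inter> S = {}}" by auto
    also have "measure_pmf.prob P \<dots> = (\<Sum>S\<in>{S. S \<subseteq> {1..n} \<and> A \<subseteq> S \<and> B \<inter> S = {}}. pmf P S)"
      by (intro measure_measure_pmf_finite) auto
    also have "\<dots> = (\<Sum>S\<in>{S. S \<subseteq> {1..n} \<and> A \<subseteq> S \<and> B \<inter> S = {}}. wt n S)"
      by (intro sum.cong) (auto simp: pmfP f_def)
    also have "\<dots> = Rr (Fv n) A B" using wt_sum AB n by simp
    finally show "measure_pmf.prob P {S. A \<subseteq> S \<and> B \<inter> S = {}} = Rr (Fv n) A B" .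
  qed
  then show ?thesis by blast
qed

lemma GBP2_prob:
  assumes "GBP2 H c lam n P" "n \<ge> 1" "A \<subseteq> {1..n}" "B \<subseteq> {1..n}" "A \<inter> B = {}"
  shows "measure_pmf.prob P {S. A \<subseteq> S \<and> B \<inter> S = {}} = Rr (Fv n) A B"
  using assms GBP2_iff[of n P] by (auto simp: GBP2_def)

lemma GBP2_unique:
  assumes n: "n \<ge> 1" and P: "GBP2 H c lam n P" and Q: "GBP2 H c lam n Q"
  shows "P = Q"
proof (rule pmf_eqI)
  fix S
  have spP: "set_pmf P \<subseteq> Pow {1..n}" and spQ: "set_pmf Q \<subseteq> Pow {1..n}" using P Q by (auto simp: GBP2_def)
  show "pmf P S = pmf Q S"
  proof (cases "S \<subseteq> {1..n}")
    case False
    then have "S \<notin> set_pmf P" "S \<notin> set_pmf Q" using spP spQ by auto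
    then show ?thesis by (simp add: set_pmf_eq)
  next
    case True
    have key: "pmf R S = Rr (Fv n) S ({1..n} - S)" if R: "GBP2 H c lam n R" for R
    proof -
      have spR: "set_pmf R \<subseteq> Pow {1..n}" using R by (auto simp: GBP2_def)
      have "measure_pmf.prob R {T. S \<subseteq> T \<and> ({1..n} - S) \<inter> T = {}} =
          measure_pmf.prob R ({T. S \<subseteq> T \<and> ({1..n} - S) \<inter> T = {}} \<inter> Pow {1..n})"
        using spR by (rule prob_restrict)
      also have "{T. S \<subseteq> T \<and> ({1..n} - S) \<inter> T = {}} \<inter> Pow {1..n} = {S}" using True by auto
      finally have "pmf R S = measure_pmf.prob R {T. S \<subseteq> T \<and> ({1..n} - S) \<inter> T = {}}"
        by (simp add: measure_pmf_single)
      also have "\<dots> = Rr (Fv n) S ({1..n} - S)" using GBP2_prob[OF R n True] by auto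
      finally show ?thesis .
    qed
    show ?thesis using key[OF P] key[OF Q] by simp
  qed
qed

end


lemma mvt_powr:
  assumes "(x::real) > 0"
  shows "\<exists>z. x < z \<and> z < x + 1 \<and> (x+1) powr p - x powr p = p * z powr (p - 1)"
proof -
  have "\<exists>z. x < z \<and> z < x + 1 \<and> ((x+1) powr p - x powr p = ((x+1) - x) * (p * z powr (p - 1)))"
    using assms by (intro MVT2) (auto intro!: has_real_derivative_powr)
  then show ?thesis by simp
qed

definition Uf :: "real \<Rightarrow> nat \<Rightarrow> real" where "Uf H n = (\<Sum>i<n. real (Suc i) powr (2*H-2))"

definition SSf :: "real \<Rightarrow> nat \<Rightarrow> real" where
  "SSf H n = (\<Sum>i\<in>{1..n}. \<Sum>j\<in>{1..n} - {i}. \<bar>real i - real j\<bar> powr (2*H-2))"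

context
  fixes H :: real
  assumes H: "1/2 < H" "H < 1"
begin

lemma I1: assumes "x \<ge> (1::real)" shows "x powr (2*H-2) \<le> (x powr (2*H-1) - (x-1) powr (2*H-1)) / (2*H-1)"
proof (cases "x = 1")
  case True
  then show ?thesis using H by (simp add: field_simps)
next
  case False
  then have x1: "x - 1 > 0" using assms by simp
  obtain z where z: "x - 1 < z" "z < x" "x powr (2*H-1) - (x-1) powr (2*H-1) = (2*H-1) * z powr (2*H-1-1)"
    using mvt_powr[OF x1, of "2*H-1"] by auto
  have "x powr (2*H-2) \<le> z powr (2*H-2)" using z x1 H by (intro powr_mono2') auto
  moreover have d: "x powr (2*H-1) - (x-1) powr (2*H-1) = (2*H-1) * z powr (2*H-2)" using z(3) by (simp add: algebra_simps)
  ultimately show ?thesis unfolding d using H by simp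
qed

lemma I2: assumes "x > (0::real)" shows "((x+1) powr (2*H-1) - x powr (2*H-1)) / (2*H-1) \<le> x powr (2*H-2)"
proof -
  obtain z where z: "x < z" "z < x+1" "(x+1) powr (2*H-1) - x powr (2*H-1) = (2*H-1) * z powr (2*H-1-1)"
    using mvt_powr[OF assms, of "2*H-1"] by auto
  have "z powr (2*H-2) \<le> x powr (2*H-2)" using z assms H by (intro powr_mono2') auto
  moreover have d: "(x+1) powr (2*H-1) - x powr (2*H-1) = (2*H-1) * z powr (2*H-2)" using z(3) by (simp add: algebra_simps)
  ultimately show ?thesis unfolding d using H by simp
qed

lemma I3: assumes "x \<ge> (0::real)" shows "x powr (2*H-1) \<le> ((x+1) powr (2*H) - x powr (2*H)) / (2*H)"
proof (cases "x = 0")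
  case True
  then show ?thesis using H by simp
next
  case False
  then have x0: "x > 0" using assms by simp
  obtain z where z: "x < z" "z < x+1" "(x+1) powr (2*H) - x powr (2*H) = (2*H) * z powr (2*H-1)"
    using mvt_powr[OF x0, of "2*H"] by auto
  have "x powr (2*H-1) \<le> z powr (2*H-1)" using z x0 H by (intro powr_mono2) auto
  then show ?thesis using z H by (simp add: field_simps)
qed

lemma I4: assumes "x \<ge> (0::real)" shows "((x+1) powr (2*H) - x powr (2*H)) / (2*H) \<le> (x+1) powr (2*H-1)"
proof (cases "x = 0")
  case True
  then show ?thesis using H by (simp add: field_simps)
next
  case False
  then have x0: "x > 0" using assms by simp
  obtain z where z: "x < z" "z < x+1" "(x+1) powr (2*H) - x powr (2*H) = (2*H) * z powr (2*H-1)"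
    using mvt_powr[OF x0, of "2*H"] by auto
  have "z powr (2*H-1) \<le> (x+1) powr (2*H-1)" using z x0 H by (intro powr_mono2) auto
  then show ?thesis using z H by (simp add: field_simps)
qed

lemma Uf_alt: "(\<Sum>j\<in>{1..n}. (real (Suc n) - real j) powr (2*H-2)) = Uf H n"
  unfolding Uf_def
  by (rule sum.reindex_bij_witness[where i="\<lambda>i. n - i" and j="\<lambda>j. n - j"]) (auto simp: of_nat_diff add_diff_eq)

lemma SSf_Suc: "SSf H (Suc n) = SSf H n + 2 * Uf H n"
proof -
  have e: "{1..Suc n} = insert (Suc n) {1..n}" by auto
  have "SSf H (Suc n) = (\<Sum>j\<in>{1..Suc n} - {Suc n}. \<bar>real (Suc n) - real j\<bar> powr (2*H-2)) +
      (\<Sum>i\<in>{1..n}. \<Sum>j\<in>{1..Suc n} - {i}. \<bar>real i - real j\<bar> powr (2*H-2))"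
    unfolding SSf_def e by (subst sum.insert) auto
  also have "(\<Sum>j\<in>{1..Suc n} - {Suc n}. \<bar>real (Suc n) - real j\<bar> powr (2*H-2)) = Uf H n"
    unfolding Uf_alt[symmetric] by (intro sum.cong) auto
  also have "(\<Sum>i\<in>{1..n}. \<Sum>j\<in>{1..Suc n} - {i}. \<bar>real i - real j\<bar> powr (2*H-2))
     = (\<Sum>i\<in>{1..n}. (real (Suc n) - real i) powr (2*H-2) + (\<Sum>j\<in>{1..n} - {i}. \<bar>real i - real j\<bar> powr (2*H-2)))"
  proof (intro sum.cong refl)
    fix i assume i: "i \<in> {1..n}"
    have "{1..Suc n} - {i} = insert (Suc n) ({1..n} - {i})" using i by auto
    then show "(\<Sum>j\<in>{1..Suc n} - {i}. \<bar>real i - real j\<bar> powr (2*H-2)) =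
       (real (Suc n) - real i) powr (2*H-2) + (\<Sum>j\<in>{1..n} - {i}. \<bar>real i - real j\<bar> powr (2*H-2))"
      using i by (simp add: abs_if)
  qed
  also have "\<dots> = Uf H n + SSf H n" unfolding SSf_def Uf_alt[symmetric] by (simp add: sum.distrib)
  finally show ?thesis by simp
qed

lemma SSf_formula: "SSf H n = 2 * (\<Sum>k<n. Uf H k)"
  by (induction n) (simp add: SSf_def, simp add: SSf_Suc)

lemma Uf_upper: "Uf H n \<le> real n powr (2*H-1) / (2*H-1)"
proof -
  have "Uf H n \<le> (\<Sum>i<n. (real (Suc i) powr (2*H-1) - real i powr (2*H-1)) / (2*H-1))"
    unfolding Uf_def
  proof (intro sum_mono)
    fix i assume "i \<in> {..<n}"
    have "real (Suc i) powr (2*H-2) \<le> (real (Suc i) powr (2*H-1) - (real (Suc i) - 1) powr (2*H-1)) / (2*H-1)"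
      by (rule I1) simp
    then show "real (Suc i) powr (2*H-2) \<le> (real (Suc i) powr (2*H-1) - real i powr (2*H-1)) / (2*H-1)" by simp
  qed
  also have "\<dots> = (\<Sum>i<n. real (Suc i) powr (2*H-1) / (2*H-1) - real i powr (2*H-1) / (2*H-1))"
    by (simp add: diff_divide_distrib)
  also have "\<dots> = real n powr (2*H-1) / (2*H-1)"
    by (subst sum_lessThan_telescope[where f="\<lambda>i. real i powr (2*H-1) / (2*H-1)"]) simp
  finally show ?thesis .
qed

lemma Uf_lower: "(real (Suc n) powr (2*H-1) - 1) / (2*H-1) \<le> Uf H n"
proof -
  have "(\<Sum>i<n. real (Suc (Suc i)) powr (2*H-1) / (2*H-1) - real (Suc i) powr (2*H-1) / (2*H-1)) \<le> Uf H n"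
    unfolding Uf_def
  proof (intro sum_mono)
    fix i assume "i \<in> {..<n}"
    have "((real (Suc i) + 1) powr (2*H-1) - real (Suc i) powr (2*H-1)) / (2*H-1) \<le> real (Suc i) powr (2*H-2)"
      by (rule I2) simp
    moreover have "real (Suc i) + 1 = real (Suc (Suc i))" by simp
    ultimately show "real (Suc (Suc i)) powr (2*H-1) / (2*H-1) - real (Suc i) powr (2*H-1) / (2*H-1) \<le> real (Suc i) powr (2*H-2)"
      by (simp add: diff_divide_distrib)
  qed
  moreover have "(\<Sum>i<n. real (Suc (Suc i)) powr (2*H-1) / (2*H-1) - real (Suc i) powr (2*H-1) / (2*H-1))
      = real (Suc n) powr (2*H-1) / (2*H-1) - 1 / (2*H-1)"
    by (subst sum_lessThan_telescope[where f="\<lambda>i. real (Suc i) powr (2*H-1) / (2*H-1)"]) simp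
  ultimately show ?thesis by (simp add: diff_divide_distrib)
qed

lemma SSf_upper: "SSf H n \<le> real n powr (2*H) / (H * (2*H-1))"
proof -
  have "(\<Sum>k<n. Uf H k) \<le> (\<Sum>k<n. real k powr (2*H-1) / (2*H-1))"
    by (intro sum_mono Uf_upper)
  also have "\<dots> \<le> (\<Sum>k<n. ((real k + 1) powr (2*H) - real k powr (2*H)) / (2*H) / (2*H-1))"
    using I3 H by (intro sum_mono divide_right_mono) auto
  also have "\<dots> = (\<Sum>k<n. real (Suc k) powr (2*H) / (2*H) / (2*H-1) - real k powr (2*H) / (2*H) / (2*H-1))"
    by (intro sum.cong refl) (simp add: diff_divide_distrib add.commute)
  also have "\<dots> = real n powr (2*H) / (2*H) / (2*H-1)"
    by (subst sum_lessThan_telescope[where f="\<lambda>i. real i powr (2*H) / (2*H) / (2*H-1)"]) simp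
  finally show ?thesis unfolding SSf_formula using H by (simp add: field_simps)
qed

lemma SSf_lower: "(real n powr (2*H) / (2*H) - real n) / (2*H-1) * 2 \<le> SSf H n"
proof -
  have "(\<Sum>k<n. ((real k + 1) powr (2*H) - real k powr (2*H)) / (2*H) / (2*H-1) - 1 / (2*H-1))
       \<le> (\<Sum>k<n. (real (Suc k) powr (2*H-1) - 1) / (2*H-1))"
  proof (intro sum_mono)
    fix k assume "k \<in> {..<n}"
    have "((real k + 1) powr (2*H) - real k powr (2*H)) / (2*H) \<le> (real k + 1) powr (2*H-1)"
      by (rule I4) simp
    then have "((real k + 1) powr (2*H) - real k powr (2*H)) / (2*H) / (2*H-1) \<le> (real k + 1) powr (2*H-1) / (2*H-1)"
      using H by (intro divide_right_mono) auto
    then show "((real k + 1) powr (2*H) - real k powr (2*H)) / (2*H) / (2*H-1) - 1 / (2*H-1)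
       \<le> (real (Suc k) powr (2*H-1) - 1) / (2*H-1)"
      by (simp add: diff_divide_distrib add.commute)
  qed
  also have "\<dots> \<le> (\<Sum>k<n. Uf H k)" by (intro sum_mono Uf_lower)
  finally have *: "(\<Sum>k<n. ((real k + 1) powr (2*H) - real k powr (2*H)) / (2*H) / (2*H-1) - 1 / (2*H-1)) \<le> (\<Sum>k<n. Uf H k)" .
  have "(\<Sum>k<n. ((real k + 1) powr (2*H) - real k powr (2*H)) / (2*H) / (2*H-1) - 1 / (2*H-1))
      = (\<Sum>k<n. (real (Suc k) powr (2*H) / (2*H) / (2*H-1) - real k powr (2*H) / (2*H) / (2*H-1))) - real n / (2*H-1)"
    by (simp add: sum_subtractf diff_divide_distrib add.commute)
  also have "\<dots> = real n powr (2*H) / (2*H) / (2*H-1) - real n / (2*H-1)"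
    by (subst sum_lessThan_telescope[where f="\<lambda>i. real i powr (2*H) / (2*H) / (2*H-1)"]) simp
  finally have L: "real n powr (2*H) / (2*H) / (2*H-1) - real n / (2*H-1) \<le> (\<Sum>k<n. Uf H k)" using * by simp
  show ?thesis unfolding SSf_formula using mult_left_mono[OF L, of 2] by (simp add: diff_divide_distrib mult.commute)
qed

lemma SSf_lim: "(\<lambda>n. SSf H n / real n powr (2*H)) \<longlonglongrightarrow> 1 / (H * (2*H-1))"
proof (rule tendsto_sandwich)
  show "\<forall>\<^sub>F n in sequentially. (1 / (H * (2*H-1)) - 2 / (2*H-1) * real n powr (1 - 2*H)) \<le> SSf H n / real n powr (2*H)"
    using eventually_ge_at_top[of 1]
  proof eventually_elim
    case (elim n)
    then have np: "real n powr (2*H) > 0" by simp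
    have "real n / real n powr (2*H) = real n powr (1 - 2*H)"
      using elim by (simp add: powr_diff)
    have "(real n powr (2*H) / (2*H) - real n) / (2*H-1) * 2 / real n powr (2*H) \<le> SSf H n / real n powr (2*H)"
      using SSf_lower np by (intro divide_right_mono) auto
    moreover have "(real n powr (2*H) / (2*H) - real n) / (2*H-1) * 2 / real n powr (2*H)
        = 1 / (H * (2*H-1)) - 2 / (2*H-1) * (real n / real n powr (2*H))"
    proof -
      have h: "2*H-1 \<noteq> 0" "H \<noteq> 0" using H by auto
      have gen: "\<And>q m::real. q > 0 \<Longrightarrow> (q / (2*H) - m) / (2*H-1) * 2 / q = 1 / (H * (2*H-1)) - 2 / (2*H-1) * (m / q)"
      proof -
        fix q m :: real assume q: "q > 0"
        have "(q / (2*H) - m) / (2*H-1) * 2 / q = 2 / (2*H-1) * ((q / (2*H) - m) / q)" by simp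
        also have "(q / (2*H) - m) / q = 1 / (2*H) - m / q" using q by (simp add: diff_divide_distrib)
        also have "2 / (2*H-1) * (1 / (2*H) - m / q) = 2 / (2*H-1) * (1 / (2*H)) - 2 / (2*H-1) * (m / q)"
          by (simp add: right_diff_distrib)
        also have "2 / (2*H-1) * (1 / (2*H)) = 1 / (H * (2*H-1))" using h by (simp add: field_simps)
        finally show "(q / (2*H) - m) / (2*H-1) * 2 / q = 1 / (H * (2*H-1)) - 2 / (2*H-1) * (m / q)" .
      qed
      show ?thesis by (rule gen[OF np])
    qed
    ultimately show ?case using \<open>real n / real n powr (2*H) = real n powr (1 - 2*H)\<close> by simp
  qed
  show "\<forall>\<^sub>F n in sequentially. SSf H n / real n powr (2*H) \<le> 1 / (H * (2*H-1))"
    using eventually_ge_at_top[of 1]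
  proof eventually_elim
    case (elim n)
    then have np: "real n powr (2*H) > 0" by simp
    have "SSf H n / real n powr (2*H) \<le> real n powr (2*H) / (H * (2*H-1)) / real n powr (2*H)"
      using SSf_upper np by (intro divide_right_mono) auto
    then show ?case using np by simp
  qed
  have "(\<lambda>n. real n powr (1 - 2*H)) \<longlonglongrightarrow> 0"
    using H by (intro tendsto_neg_powr filterlim_real_sequentially) auto
  then have "(\<lambda>n. 1 / (H * (2*H-1)) - 2 / (2*H-1) * real n powr (1 - 2*H)) \<longlonglongrightarrow> 1 / (H * (2*H-1)) - 2 / (2*H-1) * 0"
    by (intro tendsto_intros)
  then show "(\<lambda>n. 1 / (H * (2*H-1)) - 2 / (2*H-1) * real n powr (1 - 2*H)) \<longlonglongrightarrow> 1 / (H * (2*H-1))" by simp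
qed simp

end


lemma E_fin: "finite (set_pmf P) \<Longrightarrow> measure_pmf.expectation P f = (\<Sum>a\<in>set_pmf P. f a * pmf P a)"
  by (rule integral_measure_pmf_real) (auto simp: set_pmf_eq)

lemma cov_expand:
  assumes fin: "finite (set_pmf P)"
  shows "cov_pmf P X Y = measure_pmf.expectation P (\<lambda>s. X s * Y s)
     - measure_pmf.expectation P X * measure_pmf.expectation P Y"
proof -
  let ?A = "set_pmf P"
  define a where "a = measure_pmf.expectation P X"
  define b where "b = measure_pmf.expectation P Y"
  have a: "a = (\<Sum>s\<in>?A. X s * pmf P s)" unfolding a_def using fin by (rule E_fin)
  have b: "b = (\<Sum>s\<in>?A. Y s * pmf P s)" unfolding b_def using fin by (rule E_fin)
  have one: "(\<Sum>s\<in>?A. pmf P s) = 1" using fin by (rule sum_pmf_eq_1) simp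
  have "cov_pmf P X Y = (\<Sum>s\<in>?A. (X s - a) * (Y s - b) * pmf P s)"
    unfolding cov_pmf_def a_def[symmetric] b_def[symmetric] using fin by (rule E_fin)
  also have "\<dots> = (\<Sum>s\<in>?A. X s * Y s * pmf P s - a * (Y s * pmf P s) - b * (X s * pmf P s) + a * b * pmf P s)"
    by (intro sum.cong refl) (simp add: algebra_simps)
  also have "\<dots> = (\<Sum>s\<in>?A. X s * Y s * pmf P s) - a * (\<Sum>s\<in>?A. Y s * pmf P s) - b * (\<Sum>s\<in>?A. X s * pmf P s)
      + a * b * (\<Sum>s\<in>?A. pmf P s)"
    by (simp add: sum.distrib sum_subtractf sum_distrib_left)
  also have "\<dots> = (\<Sum>s\<in>?A. X s * Y s * pmf P s) - a * b"
    unfolding a[symmetric] b[symmetric] one by simp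
  also have "(\<Sum>s\<in>?A. X s * Y s * pmf P s) = measure_pmf.expectation P (\<lambda>s. X s * Y s)"
    using fin by (rule E_fin[symmetric])
  finally show ?thesis unfolding a_def b_def .
qed

lemma var_expand:
  fixes X :: "'a \<Rightarrow> real"
  assumes fin: "finite (set_pmf P)"
  shows "measure_pmf.variance P X = measure_pmf.expectation P (\<lambda>s. (X s)\<^sup>2) - (measure_pmf.expectation P X)\<^sup>2"
  using cov_expand[OF fin, of X X] unfolding cov_pmf_def by (simp add: power2_eq_square)

lemma Xc_ind: "Xc i = indicator {S. i \<in> S}"
  by (auto simp: Xc_def fun_eq_iff)

lemma Xc_mult: "(\<lambda>S. Xc i S * Xc j S) = indicator {S. i \<in> S \<and> j \<in> S}"
  by (auto simp: Xc_def fun_eq_iff)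

lemma Rr_empty2: "Rr F A {} = F A"
  by (simp add: Rr_def)

lemma Rr_single: "b \<notin> A \<Longrightarrow> Rr F A {b} = F A - F (insert b A)"
proof -
  have "Pow {b} = {{}, {b}}" by auto
  then show "b \<notin> A \<Longrightarrow> Rr F A {b} = F A - F (insert b A)" by (simp add: Rr_def)
qed

context gbp begin

lemma Lcirc_gl: "finite U \<Longrightarrow> U \<noteq> {} \<Longrightarrow>
   Lcirc H c lam n U = gl (\<lambda>d. real d powr (2*H-2)) (sorted_list_of_set U)"
  using prod_gl[where xs="sorted_list_of_set U"] by (simp add: Lcirc_def Let_def)

lemma Fv_shift:
  assumes "finite U" "\<forall>x\<in>U. \<forall>y\<in>U. x < y \<longrightarrow> sh x < sh y \<and> sh y - sh x = y - x"
  shows "Fv n (sh ` U) = Fv n U"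
proof (cases "U = {}")
  case True then show ?thesis by simp
next
  case False
  have inj: "inj_on sh U" using assms(2) by (metis inj_onI linorder_neq_iff order_less_irrefl)
  have sl: "sorted_list_of_set (sh ` U) = map sh (sorted_list_of_set U)"
    using assms by (intro sorted_list_map) auto
  have "Lcirc H c lam n (sh ` U) = Lcirc H c lam n U"
    using False assms
    by (simp add: Lcirc_gl sl, intro gl_map) auto
  moreover have "card (sh ` U) = card U" using inj by (simp add: card_image)
  ultimately show ?thesis by (simp add: Fv_def)
qed

lemma pn_lt1: "n \<ge> 1 \<Longrightarrow> pn H lam n < 1"
proof -
  assume n: "n \<ge> 1"
  have "real n powr (2*H-2) \<le> real n powr 0" using n H by (intro powr_mono) auto
  then have "real n powr (2*H-2) \<le> 1" using n by simp
  then have "lam * real n powr (2*H-2) \<le> lam * 1" using lam by (intro mult_left_mono) auto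
  moreover have "lam < 1" using lam c_lt1 by simp
  ultimately show ?thesis by (simp add: pn_def)
qed

lemma pn_lim: "(\<lambda>n. pn H lam n) \<longlonglongrightarrow> 0"
proof -
  have "(\<lambda>n. real n powr (2*H-2)) \<longlonglongrightarrow> 0"
    using H by (intro tendsto_neg_powr filterlim_real_sequentially) auto
  then have "(\<lambda>n. lam * real n powr (2*H-2)) \<longlonglongrightarrow> lam * 0" by (intro tendsto_intros)
  then show ?thesis by (simp add: pn_def)
qed

context
  fixes n :: nat and P :: "nat set pmf"
  assumes n: "n \<ge> 1" and P: "GBP2 H c lam n P"
begin

lemma sp: "set_pmf P \<subseteq> Pow {1..n}" using P by (simp add: GBP2_def)

lemma fin: "finite (set_pmf P)" using sp by (rule finite_subset) simp

lemma prob_in: "i \<in> {1..n} \<Longrightarrow> measure_pmf.prob P {S. i \<in> S} = pn H lam n"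
proof -
  assume i: "i \<in> {1..n}"
  have "measure_pmf.prob P {S. {i} \<subseteq> S \<and> {} \<inter> S = {}} = Rr (Fv n) {i} {}"
    using i by (intro GBP2_prob[OF P n]) auto
  then show ?thesis by (simp add: Rr_empty2 Fv_ne)
qed

lemma prob_out: "i \<in> {1..n} \<Longrightarrow> measure_pmf.prob P {S. i \<notin> S} = 1 - pn H lam n"
proof -
  assume i: "i \<in> {1..n}"
  have "measure_pmf.prob P {S. {} \<subseteq> S \<and> {i} \<inter> S = {}} = Rr (Fv n) {} {i}"
    using i by (intro GBP2_prob[OF P n]) auto
  then show ?thesis using n by (simp add: Rr_single Fv_ne Fv_empty)
qed

lemma gpr_pair: "i \<noteq> j \<Longrightarrow> gpr {i, j} = c * \<bar>real i - real j\<bar> powr (2*H-2)"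
proof -
  assume ij: "i \<noteq> j"
  show ?thesis
  proof (cases "i < j")
    case True
    then have "gpr (insert j {i}) = gpr {i} * aa (j - Max {i})" by (intro gpr_insert_max) auto
    then show ?thesis using True by (simp add: insert_commute aa_def of_nat_diff)
  next
    case False
    then have "j < i" using ij by simp
    then have "gpr (insert i {j}) = gpr {j} * aa (i - Max {j})" by (intro gpr_insert_max) auto
    then show ?thesis using \<open>j < i\<close> by (simp add: aa_def of_nat_diff)
  qed
qed

lemma prob_pair: "i \<in> {1..n} \<Longrightarrow> j \<in> {1..n} \<Longrightarrow> i \<noteq> j \<Longrightarrow>
   measure_pmf.prob P {S. i \<in> S \<and> j \<in> S} = pn H lam n * c * \<bar>real i - real j\<bar> powr (2*H-2)"
proof -
  assume ij: "i \<in> {1..n}" "j \<in> {1..n}" "i \<noteq> j"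
  have "measure_pmf.prob P {S. {i, j} \<subseteq> S \<and> {} \<inter> S = {}} = Rr (Fv n) {i, j} {}"
    using ij by (intro GBP2_prob[OF P n]) auto
  then show ?thesis using ij by (simp add: Rr_empty2 Fv_ne gpr_pair)
qed

lemma E_X: "i \<in> {1..n} \<Longrightarrow> measure_pmf.expectation P (Xc i) = pn H lam n"
  by (simp add: Xc_ind prob_in)

lemma E_XX: "i \<in> {1..n} \<Longrightarrow> j \<in> {1..n} \<Longrightarrow>
   measure_pmf.expectation P (\<lambda>S. Xc i S * Xc j S) =
   (if i = j then pn H lam n else pn H lam n * c * \<bar>real i - real j\<bar> powr (2*H-2))"
  by (simp add: Xc_mult prob_pair prob_in)

lemma cov_X: "i \<in> {1..n} \<Longrightarrow> j \<in> {1..n} \<Longrightarrow> i \<noteq> j \<Longrightarrow>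
   cov_pmf P (Xc i) (Xc j) = pn H lam n * c * \<bar>real i - real j\<bar> powr (2*H-2) - (pn H lam n)\<^sup>2"
  by (simp add: cov_expand[OF fin] E_XX E_X power2_eq_square)

lemma var_X: "i \<in> {1..n} \<Longrightarrow> measure_pmf.variance P (Xc i) = pn H lam n - (pn H lam n)\<^sup>2"
proof -
  assume i: "i \<in> {1..n}"
  have "(\<lambda>S. (Xc i S)\<^sup>2) = (\<lambda>S. Xc i S * Xc i S)" by (simp add: power2_eq_square)
  moreover have "measure_pmf.variance P (Xc i) = measure_pmf.expectation P (\<lambda>S. (Xc i S)\<^sup>2) - (measure_pmf.expectation P (Xc i))\<^sup>2"
    by (rule var_expand[OF fin])
  ultimately show ?thesis using i by (simp add: E_XX E_X)
qed

lemma corr_X: "i \<in> {1..n} \<Longrightarrow> j \<in> {1..n} \<Longrightarrow> i \<noteq> j \<Longrightarrow>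
   corr_pmf P (Xc i) (Xc j) = (c * \<bar>real i - real j\<bar> powr (2*H-2) - pn H lam n) / (1 - pn H lam n)"
proof -
  assume ij: "i \<in> {1..n}" "j \<in> {1..n}" "i \<noteq> j"
  define p where "p = pn H lam n"
  have p: "0 < p" "p < 1" using pn_pos[OF n] pn_lt1[OF n] by (auto simp: p_def)
  have pos: "p - p\<^sup>2 > 0" using p by (simp add: power2_eq_square algebra_simps mult_less_cancel_left_pos)
  have "sqrt ((p - p\<^sup>2) * (p - p\<^sup>2)) = p - p\<^sup>2" using pos by simp
  then have "corr_pmf P (Xc i) (Xc j) = (p * c * \<bar>real i - real j\<bar> powr (2*H-2) - p\<^sup>2) / (p - p\<^sup>2)"
    using ij by (simp add: corr_pmf_def cov_X var_X p_def)
  also have "\<dots> = (c * \<bar>real i - real j\<bar> powr (2*H-2) - p) / (1 - p)"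
    using p by (simp add: power2_eq_square field_simps)
  finally show ?thesis by (simp add: p_def)
qed

lemma E_B: "measure_pmf.expectation P (\<lambda>S. \<Sum>i=1..n. Xc i S) = lam * real n powr (2*H - 1)"
proof -
  have "measure_pmf.expectation P (\<lambda>S. \<Sum>i=1..n. Xc i S) = (\<Sum>i=1..n. measure_pmf.expectation P (Xc i))"
    by (simp add: integrable_measure_pmf_finite[OF fin])
  also have "\<dots> = real n * pn H lam n" by (simp add: E_X)
  also have "\<dots> = lam * (real n * real n powr (2*H-2))" by (simp add: pn_def)
  also have "real n * real n powr (2*H-2) = real n powr (2*H-1)"
  proof -
    have "real n powr (2*H-1) = real n powr (1 + (2*H-2))" by simp
    also have "\<dots> = real n powr 1 * real n powr (2*H-2)" by (rule powr_add)
    also have "\<dots> = real n * real n powr (2*H-2)" using n by simp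
    finally show ?thesis by simp
  qed
  finally show ?thesis .
qed

lemma E_B2: "measure_pmf.expectation P (\<lambda>S. (\<Sum>i=1..n. Xc i S)\<^sup>2) = real n * pn H lam n + pn H lam n * c * SSf H n"
proof -
  have "(\<lambda>S. (\<Sum>i=1..n. Xc i S)\<^sup>2) = (\<lambda>S. \<Sum>i=1..n. \<Sum>j=1..n. Xc i S * Xc j S)"
    by (simp add: power2_eq_square sum_product)
  then have "measure_pmf.expectation P (\<lambda>S. (\<Sum>i=1..n. Xc i S)\<^sup>2) =
      (\<Sum>i=1..n. \<Sum>j=1..n. measure_pmf.expectation P (\<lambda>S. Xc i S * Xc j S))"
    by (simp add: integral_sum integrable_measure_pmf_finite fin)
  also have "\<dots> = (\<Sum>i=1..n. pn H lam n + (\<Sum>j\<in>{1..n} - {i}. pn H lam n * c * \<bar>real i - real j\<bar> powr (2*H-2)))"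
  proof (intro sum.cong refl)
    fix i assume i: "i \<in> {1..n}"
    have "(\<Sum>j=1..n. measure_pmf.expectation P (\<lambda>S. Xc i S * Xc j S)) =
       measure_pmf.expectation P (\<lambda>S. Xc i S * Xc i S) + (\<Sum>j\<in>{1..n} - {i}. measure_pmf.expectation P (\<lambda>S. Xc i S * Xc j S))"
      using i by (subst sum.remove[of _ i]) auto
    also have "\<dots> = pn H lam n + (\<Sum>j\<in>{1..n} - {i}. pn H lam n * c * \<bar>real i - real j\<bar> powr (2*H-2))"
      using i by (simp add: E_XX)
    finally show "(\<Sum>j=1..n. measure_pmf.expectation P (\<lambda>S. Xc i S * Xc j S)) =
       pn H lam n + (\<Sum>j\<in>{1..n} - {i}. pn H lam n * c * \<bar>real i - real j\<bar> powr (2*H-2))" .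
  qed
  also have "\<dots> = real n * pn H lam n + pn H lam n * c * SSf H n"
    unfolding SSf_def sum_distrib_left sum.distrib by simp
  finally show ?thesis .
qed

end

end


context gbp begin

lemma stationary:
  assumes n: "n \<ge> 1" and P: "GBP2 H c lam n P" and I: "I \<subseteq> {1..n}"
    and m: "\<forall>i\<in>I. 1 \<le> int i + m \<and> int i + m \<le> int n"
  shows "map_pmf (\<lambda>S. {i\<in>I. nat (int i + m) \<in> S}) P = map_pmf (\<lambda>S. S \<inter> I) P"
proof (rule pmf_eqI)
  fix R
  define sh where "sh i = nat (int i + m)" for i
  have shi: "\<And>i. i \<in> I \<Longrightarrow> int (sh i) = int i + m" using m by (auto simp: sh_def)
  have shr: "sh i \<in> {1..n}" if i: "i \<in> I" for i
  proof -
    have "1 \<le> int (sh i)" "int (sh i) \<le> int n" using m i shi[OF i] by auto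
    then show ?thesis by simp
  qed
  have shd: "\<forall>x\<in>U. \<forall>y\<in>U. x < y \<longrightarrow> sh x < sh y \<and> sh y - sh x = y - x" if "U \<subseteq> I" for U
  proof (intro ballI impI)
    fix x y assume "x \<in> U" "y \<in> U" "x < y"
    then have "int (sh x) = int x + m" "int (sh y) = int y + m" using shi that by auto
    then show "sh x < sh y \<and> sh y - sh x = y - x" using \<open>x < y\<close> by linarith
  qed
  have inj: "inj_on sh I" by (rule inj_onI) (metis shi add_right_cancel of_nat_eq_iff)
  have finI: "finite I" using I by (rule finite_subset) simp
  show "pmf (map_pmf (\<lambda>S. {i\<in>I. nat (int i + m) \<in> S}) P) R = pmf (map_pmf (\<lambda>S. S \<inter> I) P) R"
  proof (cases "R \<subseteq> I")
    case False
    have "(\<lambda>S. {i\<in>I. nat (int i + m) \<in> S}) -` {R} = {}"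
    proof (rule equals0I)
      fix S assume "S \<in> (\<lambda>S. {i\<in>I. nat (int i + m) \<in> S}) -` {R}"
      then have "{i\<in>I. nat (int i + m) \<in> S} = R" by simp
      then have "R \<subseteq> I" by (metis (no_types, lifting) mem_Collect_eq subsetI)
      then show False using False by simp
    qed
    moreover have "(\<lambda>S. S \<inter> I) -` {R} = {}"
    proof (rule equals0I)
      fix S assume "S \<in> (\<lambda>S. S \<inter> I) -` {R}"
      then have "S \<inter> I = R" by simp
      then have "R \<subseteq> I" by (metis Int_lower2)
      then show False using False by simp
    qed
    ultimately show ?thesis by (simp add: pmf_map)
  next
    case True
    have e1: "(\<lambda>S. {i\<in>I. nat (int i + m) \<in> S}) -` {R} = {S. sh ` R \<subseteq> S \<and> sh ` (I - R) \<inter> S = {}}"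
    proof -
      have g: "(\<lambda>S. {i\<in>I. nat (int i + m) \<in> S}) = (\<lambda>S. {i\<in>I. sh i \<in> S})" by (simp add: sh_def)
      show ?thesis unfolding g
      proof (rule set_eqI)
        fix S
        show "S \<in> (\<lambda>S. {i\<in>I. sh i \<in> S}) -` {R} \<longleftrightarrow> S \<in> {S. sh ` R \<subseteq> S \<and> sh ` (I - R) \<inter> S = {}}"
        proof
          assume "S \<in> (\<lambda>S. {i\<in>I. sh i \<in> S}) -` {R}"
          then have E: "{i\<in>I. sh i \<in> S} = R" by simp
          have "sh ` R \<subseteq> S"
          proof
            fix y assume "y \<in> sh ` R"
            then obtain i where "i \<in> R" "y = sh i" by blast
            then have "i \<in> {i\<in>I. sh i \<in> S}" using E by simp
            then show "y \<in> S" using \<open>y = sh i\<close> by simp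
          qed
          moreover have "sh ` (I - R) \<inter> S = {}"
          proof (rule equals0I)
            fix y assume "y \<in> sh ` (I - R) \<inter> S"
            then obtain i where i: "i \<in> I" "i \<notin> R" "sh i \<in> S" by blast
            then have "i \<in> {i\<in>I. sh i \<in> S}" by simp
            then show False using E i by simp
          qed
          ultimately show "S \<in> {S. sh ` R \<subseteq> S \<and> sh ` (I - R) \<inter> S = {}}" by simp
        next
          assume "S \<in> {S. sh ` R \<subseteq> S \<and> sh ` (I - R) \<inter> S = {}}"
          then have A: "sh ` R \<subseteq> S" and B: "sh ` (I - R) \<inter> S = {}" by auto
          have "{i\<in>I. sh i \<in> S} = R"
          proof (intro equalityI subsetI)
            fix i assume "i \<in> {i\<in>I. sh i \<in> S}"
            then have i: "i \<in> I" "sh i \<in> S" by auto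
            show "i \<in> R"
            proof (rule ccontr)
              assume "i \<notin> R"
              then have "sh i \<in> sh ` (I - R)" using i by blast
              then show False using B i by blast
            qed
          next
            fix i assume "i \<in> R"
            then show "i \<in> {i\<in>I. sh i \<in> S}" using A True by blast
          qed
          then show "S \<in> (\<lambda>S. {i\<in>I. sh i \<in> S}) -` {R}" by simp
        qed
      qed
    qed
    have e2: "(\<lambda>S. S \<inter> I) -` {R} = {S. R \<subseteq> S \<and> (I - R) \<inter> S = {}}" using True by auto
    have "sh ` (R \<inter> (I - R)) = sh ` R \<inter> sh ` (I - R)" using inj True by (intro inj_on_image_Int) auto
    then have d: "sh ` R \<inter> sh ` (I - R) = {}" by simp
    have p1: "measure_pmf.prob P {S. sh ` R \<subseteq> S \<and> sh ` (I - R) \<inter> S = {}} = Rr (Fv n) (sh ` R) (sh ` (I - R))"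
      using True shr d by (intro GBP2_prob[OF P n]) auto
    have p2: "measure_pmf.prob P {S. R \<subseteq> S \<and> (I - R) \<inter> S = {}} = Rr (Fv n) R (I - R)"
      using True I by (intro GBP2_prob[OF P n]) auto
    have injP: "inj_on ((`) sh) (Pow (I - R))" using inj by (intro inj_on_image_Pow) (auto intro: inj_on_subset)
    have "Rr (Fv n) (sh ` R) (sh ` (I - R)) = (\<Sum>B'\<in>(`) sh ` Pow (I - R). (-1) ^ card B' * Fv n (sh ` R \<union> B'))"
      unfolding Rr_def image_Pow_surj[OF refl] ..
    also have "\<dots> = (\<Sum>B\<in>Pow (I - R). (-1) ^ card (sh ` B) * Fv n (sh ` R \<union> sh ` B))"
      using injP by (simp add: sum.reindex)
    also have "\<dots> = Rr (Fv n) R (I - R)"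
      unfolding Rr_def
    proof (intro sum.cong refl)
      fix B assume B: "B \<in> Pow (I - R)"
      then have BI: "B \<subseteq> I" by auto
      have "card (sh ` B) = card B" using inj BI by (intro card_image) (auto intro: inj_on_subset)
      moreover have "sh ` R \<union> sh ` B = sh ` (R \<union> B)" by auto
      moreover have "Fv n (sh ` (R \<union> B)) = Fv n (R \<union> B)"
    proof (rule Fv_shift)
      show "finite (R \<union> B)" using BI True finI by (meson Un_least finite_subset)
      show "\<forall>x\<in>R \<union> B. \<forall>y\<in>R \<union> B. x < y \<longrightarrow> sh x < sh y \<and> sh y - sh x = y - x"
        using shd[of "R \<union> B"] BI True by blast
    qed
      ultimately show "(-1) ^ card (sh ` B) * Fv n (sh ` R \<union> sh ` B) = (-1) ^ card B * Fv n (R \<union> B)" by simp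
    qed
    finally show ?thesis using p1 p2 e1 e2 by (simp add: pmf_map)
  qed
qed

end


lemma ratio_helper:
  fixes lam c K x a b S :: real
  assumes "a > 0" "b > 0" "K \<noteq> 0"
  shows "(lam * x * a + lam * c * a * S) / (K * (a * b)) = (lam / K) * (x / b) + (lam * c / K) * (S / b)"
  using assms by (simp add: field_simps)

theorem theorem2p4:
  fixes H c lam :: real
  assumes H: "1/2 < H" "H < 1"
    and c: "0 < c" "c < 2 powr (2*H - 2)"
    and lam: "0 < lam" "lam < c"
  shows
    "(\<forall>n\<ge>1. \<exists>P. GBP2 H c lam n P) \<and>
     (\<forall>n\<ge>1. \<forall>P Q. GBP2 H c lam n P \<longrightarrow> GBP2 H c lam n Q \<longrightarrow> P = Q) \<and>
     (\<forall>P :: nat \<Rightarrow> nat set pmf. (\<forall>n\<ge>1. GBP2 H c lam n (P n)) \<longrightarrow>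
        (\<forall>n\<ge>1. \<forall>I (m::int). I \<subseteq> {1..n} \<longrightarrow>
             (\<forall>i\<in>I. 1 \<le> int i + m \<and> int i + m \<le> int n) \<longrightarrow>
             map_pmf (\<lambda>S. {i\<in>I. nat (int i + m) \<in> S}) (P n) = map_pmf (\<lambda>S. S \<inter> I) (P n)) \<and>
        (\<forall>n\<ge>1. \<forall>i\<in>{1..n}.
             measure_pmf.prob (P n) {S. i \<in> S} = pn H lam n \<and>
             measure_pmf.prob (P n) {S. i \<notin> S} = 1 - pn H lam n) \<and>
        (\<forall>n\<ge>1. \<forall>i\<in>{1..n}. \<forall>j\<in>{1..n}. i \<noteq> j \<longrightarrow>
             cov_pmf (P n) (Xc i) (Xc j)
               = pn H lam n * c * \<bar>real i - real j\<bar> powr (2*H - 2) - (pn H lam n)\<^sup>2) \<and>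
        (\<forall>i j. 1 \<le> i \<longrightarrow> 1 \<le> j \<longrightarrow> i \<noteq> j \<longrightarrow>
             (\<lambda>n. corr_pmf (P n) (Xc i) (Xc j)) \<longlonglongrightarrow> c * \<bar>real i - real j\<bar> powr (2*H - 2)) \<and>
        (\<forall>n\<ge>1. measure_pmf.expectation (P n) (\<lambda>S. \<Sum>i=1..n. Xc i S)
                 = lam * real n powr (2*H - 1)) \<and>
        (\<lambda>n. measure_pmf.expectation (P n) (\<lambda>S. (\<Sum>i=1..n. Xc i S)\<^sup>2))
           \<sim>[sequentially] (\<lambda>n. lam * c / ((2*H - 1) * H) * real n powr (4*H - 2)) \<and>
        (\<lambda>n. measure_pmf.variance (P n) (\<lambda>S. \<Sum>i=1..n. Xc i S))
           \<sim>[sequentially] (\<lambda>n. real n powr (4*H - 2) * (lam * c / ((2*H - 1) * H) - lam\<^sup>2)))"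
proof -
  interpret gbp H c lam by unfold_locales (use H c lam in auto)
  define K where "K = lam * c / ((2*H - 1) * H)"
  have Hpos: "2*H - 1 > 0" "H > 0" using H by auto
  have Kpos: "K > 0" unfolding K_def using Hpos c lam by simp
  have Klam: "K - lam\<^sup>2 > 0"
  proof -
    have d1: "(2*H - 1) * H < 1" using H Hpos
      by (metis diff_less_eq less_trans mult_less_cancel_left_pos mult.right_neutral nat_arith.rule0 one_add_one order.strict_trans1 order_le_less order_less_imp_le mult_strict_mono' add_mono_thms_linordered_field(5))
    have d0: "(2*H - 1) * H > 0" using Hpos by simp
    have "lam * c \<le> lam * c / ((2*H - 1) * H)"
      using d1 d0 c lam by (simp add: le_divide_eq)
    moreover have "lam * lam < lam * c" using lam by simp
    ultimately show ?thesis unfolding K_def by (simp add: power2_eq_square)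
  qed
  show ?thesis
  proof (intro conjI)
    show "\<forall>n\<ge>1. \<exists>P. GBP2 H c lam n P" using exists_GBP2 by blast
    show "\<forall>n\<ge>1. \<forall>P Q. GBP2 H c lam n P \<longrightarrow> GBP2 H c lam n Q \<longrightarrow> P = Q" using GBP2_unique by blast
  next
  show "\<forall>P :: nat \<Rightarrow> nat set pmf. (\<forall>n\<ge>1. GBP2 H c lam n (P n)) \<longrightarrow>
        (\<forall>n\<ge>1. \<forall>I (m::int). I \<subseteq> {1..n} \<longrightarrow>
             (\<forall>i\<in>I. 1 \<le> int i + m \<and> int i + m \<le> int n) \<longrightarrow>
             map_pmf (\<lambda>S. {i\<in>I. nat (int i + m) \<in> S}) (P n) = map_pmf (\<lambda>S. S \<inter> I) (P n)) \<and>
        (\<forall>n\<ge>1. \<forall>i\<in>{1..n}.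
             measure_pmf.prob (P n) {S. i \<in> S} = pn H lam n \<and>
             measure_pmf.prob (P n) {S. i \<notin> S} = 1 - pn H lam n) \<and>
        (\<forall>n\<ge>1. \<forall>i\<in>{1..n}. \<forall>j\<in>{1..n}. i \<noteq> j \<longrightarrow>
             cov_pmf (P n) (Xc i) (Xc j)
               = pn H lam n * c * \<bar>real i - real j\<bar> powr (2*H - 2) - (pn H lam n)\<^sup>2) \<and>
        (\<forall>i j. 1 \<le> i \<longrightarrow> 1 \<le> j \<longrightarrow> i \<noteq> j \<longrightarrow>
             (\<lambda>n. corr_pmf (P n) (Xc i) (Xc j)) \<longlonglongrightarrow> c * \<bar>real i - real j\<bar> powr (2*H - 2)) \<and>
        (\<forall>n\<ge>1. measure_pmf.expectation (P n) (\<lambda>S. \<Sum>i=1..n. Xc i S)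
                 = lam * real n powr (2*H - 1)) \<and>
        (\<lambda>n. measure_pmf.expectation (P n) (\<lambda>S. (\<Sum>i=1..n. Xc i S)\<^sup>2))
           \<sim>[sequentially] (\<lambda>n. lam * c / ((2*H - 1) * H) * real n powr (4*H - 2)) \<and>
        (\<lambda>n. measure_pmf.variance (P n) (\<lambda>S. \<Sum>i=1..n. Xc i S))
           \<sim>[sequentially] (\<lambda>n. real n powr (4*H - 2) * (lam * c / ((2*H - 1) * H) - lam\<^sup>2))"
  proof (intro allI impI)
    fix P :: "nat \<Rightarrow> nat set pmf"
    assume PP: "\<forall>n\<ge>1. GBP2 H c lam n (P n)"
    have G: "\<And>n. n \<ge> 1 \<Longrightarrow> GBP2 H c lam n (P n)" using PP by auto
    show "(\<forall>n\<ge>1. \<forall>I (m::int). I \<subseteq> {1..n} \<longrightarrow>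
             (\<forall>i\<in>I. 1 \<le> int i + m \<and> int i + m \<le> int n) \<longrightarrow>
             map_pmf (\<lambda>S. {i\<in>I. nat (int i + m) \<in> S}) (P n) = map_pmf (\<lambda>S. S \<inter> I) (P n)) \<and>
        (\<forall>n\<ge>1. \<forall>i\<in>{1..n}.
             measure_pmf.prob (P n) {S. i \<in> S} = pn H lam n \<and>
             measure_pmf.prob (P n) {S. i \<notin> S} = 1 - pn H lam n) \<and>
        (\<forall>n\<ge>1. \<forall>i\<in>{1..n}. \<forall>j\<in>{1..n}. i \<noteq> j \<longrightarrow>
             cov_pmf (P n) (Xc i) (Xc j)
               = pn H lam n * c * \<bar>real i - real j\<bar> powr (2*H - 2) - (pn H lam n)\<^sup>2) \<and>
        (\<forall>i j. 1 \<le> i \<longrightarrow> 1 \<le> j \<longrightarrow> i \<noteq> j \<longrightarrow>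
             (\<lambda>n. corr_pmf (P n) (Xc i) (Xc j)) \<longlonglongrightarrow> c * \<bar>real i - real j\<bar> powr (2*H - 2)) \<and>
        (\<forall>n\<ge>1. measure_pmf.expectation (P n) (\<lambda>S. \<Sum>i=1..n. Xc i S)
                 = lam * real n powr (2*H - 1)) \<and>
        (\<lambda>n. measure_pmf.expectation (P n) (\<lambda>S. (\<Sum>i=1..n. Xc i S)\<^sup>2))
           \<sim>[sequentially] (\<lambda>n. lam * c / ((2*H - 1) * H) * real n powr (4*H - 2)) \<and>
        (\<lambda>n. measure_pmf.variance (P n) (\<lambda>S. \<Sum>i=1..n. Xc i S))
           \<sim>[sequentially] (\<lambda>n. real n powr (4*H - 2) * (lam * c / ((2*H - 1) * H) - lam\<^sup>2))"
    proof (intro conjI)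
    show "\<forall>n\<ge>1. \<forall>I (m::int). I \<subseteq> {1..n} \<longrightarrow>
             (\<forall>i\<in>I. 1 \<le> int i + m \<and> int i + m \<le> int n) \<longrightarrow>
             map_pmf (\<lambda>S. {i\<in>I. nat (int i + m) \<in> S}) (P n) = map_pmf (\<lambda>S. S \<inter> I) (P n)"
      using stationary G by blast
    show "\<forall>n\<ge>1. \<forall>i\<in>{1..n}.
             measure_pmf.prob (P n) {S. i \<in> S} = pn H lam n \<and>
             measure_pmf.prob (P n) {S. i \<notin> S} = 1 - pn H lam n"
      using prob_in prob_out G by blast
    show "\<forall>n\<ge>1. \<forall>i\<in>{1..n}. \<forall>j\<in>{1..n}. i \<noteq> j \<longrightarrow>
             cov_pmf (P n) (Xc i) (Xc j)
               = pn H lam n * c * \<bar>real i - real j\<bar> powr (2*H - 2) - (pn H lam n)\<^sup>2"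
      using cov_X G by blast
    show "\<forall>i j. 1 \<le> i \<longrightarrow> 1 \<le> j \<longrightarrow> i \<noteq> j \<longrightarrow>
             (\<lambda>n. corr_pmf (P n) (Xc i) (Xc j)) \<longlonglongrightarrow> c * \<bar>real i - real j\<bar> powr (2*H - 2)"
    proof (intro allI impI)
      fix i j :: nat assume ij: "1 \<le> i" "1 \<le> j" "i \<noteq> j"
      let ?g = "c * \<bar>real i - real j\<bar> powr (2*H - 2)"
      have "(\<lambda>n. (?g - pn H lam n) / (1 - pn H lam n)) \<longlonglongrightarrow> (?g - 0) / (1 - 0)"
        by (intro tendsto_intros pn_lim) auto
      then have lim: "(\<lambda>n. (?g - pn H lam n) / (1 - pn H lam n)) \<longlonglongrightarrow> ?g" by simp
      have "\<forall>\<^sub>F n in sequentially. (?g - pn H lam n) / (1 - pn H lam n) = corr_pmf (P n) (Xc i) (Xc j)"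
        using eventually_ge_at_top[of "max i j"]
      proof eventually_elim
        case (elim n)
        then have n: "n \<ge> 1" using ij by simp
        show ?case using corr_X[OF n G[OF n]] elim ij by simp
      qed
      then show "(\<lambda>n. corr_pmf (P n) (Xc i) (Xc j)) \<longlonglongrightarrow> ?g" using lim by (rule Lim_transform_eventually[rotated])
    qed
    show "\<forall>n\<ge>1. measure_pmf.expectation (P n) (\<lambda>S. \<Sum>i=1..n. Xc i S) = lam * real n powr (2*H - 1)"
      using E_B G by blast
    define E2 where "E2 n = measure_pmf.expectation (P n) (\<lambda>S. (\<Sum>i=1..n. Xc i S)\<^sup>2)" for n
    have ratio_ev: "\<forall>\<^sub>F n in sequentially. (lam / K) * real n powr (1 - 2*H) + (lam * c / K) * (SSf H n / real n powr (2*H))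
        = E2 n / (K * real n powr (4*H - 2))"
      using eventually_ge_at_top[of 1]
    proof eventually_elim
      case (elim n)
      define x where "x = real n"
      have x: "x > 0" using elim by (simp add: x_def)
      have "E2 n = real n * pn H lam n + pn H lam n * c * SSf H n" unfolding E2_def using E_B2[OF elim G[OF elim]] .
      also have "\<dots> = lam * x * x powr (2*H-2) + lam * c * x powr (2*H-2) * SSf H n"
        by (simp add: pn_def x_def algebra_simps)
      finally have e: "E2 n = lam * x * x powr (2*H-2) + lam * c * x powr (2*H-2) * SSf H n" .
      have p: "x powr (4*H - 2) = x powr (2*H-2) * x powr (2*H)"
      proof -
        have "x powr (4*H - 2) = x powr ((2*H-2) + 2*H)" by (simp add: algebra_simps)
        also have "\<dots> = x powr (2*H-2) * x powr (2*H)" by (rule powr_add)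
        finally show ?thesis .
      qed
      have q: "x / x powr (2*H) = x powr (1 - 2*H)"
        using x by (simp add: powr_diff)
      show ?case unfolding e x_def[symmetric] p
        using ratio_helper[of "x powr (2*H-2)" "x powr (2*H)" K lam x c "SSf H n"] x Kpos q by simp
    qed
    have ratio_lim: "(\<lambda>n. E2 n / (K * real n powr (4*H - 2))) \<longlonglongrightarrow> 1"
    proof -
      have "(\<lambda>n. real n powr (1 - 2*H)) \<longlonglongrightarrow> 0"
        using H by (intro tendsto_neg_powr filterlim_real_sequentially) auto
      moreover have "(\<lambda>n. SSf H n / real n powr (2*H)) \<longlonglongrightarrow> 1 / (H * (2*H-1))"
        using SSf_lim H by blast
      ultimately have L: "(\<lambda>n. (lam / K) * real n powr (1 - 2*H) + (lam * c / K) * (SSf H n / real n powr (2*H)))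
          \<longlonglongrightarrow> (lam / K) * 0 + (lam * c / K) * (1 / (H * (2*H-1)))"
        by (intro tendsto_add tendsto_mult_left)
      have eq: "(lam / K) * 0 + (lam * c / K) * (1 / (H * (2*H-1))) = 1"
        unfolding K_def using Hpos c lam by (simp add: field_simps)
      show ?thesis using Lim_transform_eventually[OF L[unfolded eq] ratio_ev] .
    qed
    show "(\<lambda>n. measure_pmf.expectation (P n) (\<lambda>S. (\<Sum>i=1..n. Xc i S)\<^sup>2))
           \<sim>[sequentially] (\<lambda>n. lam * c / ((2*H - 1) * H) * real n powr (4*H - 2))"
      unfolding E2_def[symmetric] K_def[symmetric]
      by (rule asymp_equivI') (use ratio_lim in simp)
    have var_ev: "\<forall>\<^sub>F n in sequentially. (K * (E2 n / (K * real n powr (4*H - 2))) - lam\<^sup>2) / (K - lam\<^sup>2)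
       = measure_pmf.variance (P n) (\<lambda>S. \<Sum>i=1..n. Xc i S) / (real n powr (4*H - 2) * (K - lam\<^sup>2))"
      using eventually_ge_at_top[of 1]
    proof eventually_elim
      case (elim n)
      define x where "x = real n"
      have x: "x > 0" using elim by (simp add: x_def)
      have fin: "finite (set_pmf (P n))" using fin[OF elim G[OF elim]] .
      have "measure_pmf.variance (P n) (\<lambda>S. \<Sum>i=1..n. Xc i S) = E2 n - (lam * x powr (2*H - 1))\<^sup>2"
      proof -
        have "measure_pmf.variance (P n) (\<lambda>S. \<Sum>i=1..n. Xc i S) =
          measure_pmf.expectation (P n) (\<lambda>S. (\<Sum>i=1..n. Xc i S)\<^sup>2) - (measure_pmf.expectation (P n) (\<lambda>S. \<Sum>i=1..n. Xc i S))\<^sup>2"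
          by (rule var_expand[OF fin])
        then show ?thesis unfolding E2_def E_B[OF elim G[OF elim]] x_def .
      qed
      also have "(lam * x powr (2*H - 1))\<^sup>2 = lam\<^sup>2 * x powr (4*H - 2)"
      proof -
        have "x powr (4*H - 2) = x powr ((2*H-1) + (2*H-1))" by (simp add: algebra_simps)
        also have "\<dots> = x powr (2*H-1) * x powr (2*H-1)" by (rule powr_add)
        finally show ?thesis by (simp add: power2_eq_square)
      qed
      finally have v: "measure_pmf.variance (P n) (\<lambda>S. \<Sum>i=1..n. Xc i S) = E2 n - lam\<^sup>2 * x powr (4*H - 2)" .
      have xp: "x powr (4*H - 2) > 0" using x by simp
      show ?case unfolding v x_def[symmetric] using xp Kpos Klam by (simp add: field_simps)
    qed
    have "(\<lambda>n. (K * (E2 n / (K * real n powr (4*H - 2))) - lam\<^sup>2) / (K - lam\<^sup>2)) \<longlonglongrightarrow> (K * 1 - lam\<^sup>2) / (K - lam\<^sup>2)"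
      by (intro tendsto_intros ratio_lim) (use Klam in auto)
    then have "(\<lambda>n. measure_pmf.variance (P n) (\<lambda>S. \<Sum>i=1..n. Xc i S) / (real n powr (4*H - 2) * (K - lam\<^sup>2))) \<longlonglongrightarrow> 1"
      using Lim_transform_eventually[OF _ var_ev] Klam by simp
    then show "(\<lambda>n. measure_pmf.variance (P n) (\<lambda>S. \<Sum>i=1..n. Xc i S))
           \<sim>[sequentially] (\<lambda>n. real n powr (4*H - 2) * (lam * c / ((2*H - 1) * H) - lam\<^sup>2))"
      unfolding K_def[symmetric] by (rule asymp_equivI')
  qed
  qed
  qed
qed


end
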